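(* Let $k$ be a field of characteristic $p>2$ ($p$ prime). The $T$-space $W^{S_0}$ of $k_0\langle X\rangle$ is not finitely based.
   Context: $X=\{x_i\mid i\ge0\}$ countably infinite; $k_0\langle X\rangle$ the free nonunitary associative $k$-algebra on $X$; $[a,b]=ab-ba$. A $T$-space is a subspace invariant under all endomorphisms of $k_0\langle X\rangle$; $H^{S_0}$ is the smallest $T$-space containing $H$; a $T$-space is finitely based if it equals $H^{S_0}$ for finite $H$. $\kappa(u,v)=[u,v]u^{p-1}v^{p-1}$, $w_m=\prod_{r=1}^m\kappa(x_{2r-1},x_{2r})$, $w_m(u_1,\ldots,u_{2m})$ the image under $x_j\mapsto u_j$. For $m\ge1$, $I_m$ is the set of strictly increasing functions $\{1,\ldots,2m\}\to\mathbb{Z}^+$, $W_m=\{w_j(x_{f(1)},\ldots,x_{f(2j)})\mid 1\le j\le m,\ f\in I_j\}$, $W=\bigcup_{m\ge1}W_m$. *)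

theory Defs
  imports "HOL-Computational_Algebra.Primes"
begin

text \<open>Noncommutative polynomials in variables x_0, x_1, ... over 'k, represented as
  coefficient functions on words (lists of variable indices).
  The free nonunitary algebra k_0<X> is the set of finitely supported such
  functions with zero coefficient on the empty word.\<close>

type_synonym 'k ncpoly = "nat list \<Rightarrow> 'k"

definition ncP :: "('k::field) ncpoly set" where
  "ncP = {f. finite {w. f w \<noteq> 0} \<and> f [] = 0}"

definition nc_add :: "('k::field) ncpoly \<Rightarrow> 'k ncpoly \<Rightarrow> 'k ncpoly" where
  "nc_add f g = (\<lambda>w. f w + g w)"

definition nc_smult :: "'k::field \<Rightarrow> 'k ncpoly \<Rightarrow> 'k ncpoly" where
  "nc_smult c f = (\<lambda>w. c * f w)"

definition nc_zero :: "('k::field) ncpoly" where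
  "nc_zero = (\<lambda>w. 0)"

text \<open>Unit (empty word); used only internally for evaluating monomials.\<close>
definition nc_one :: "('k::field) ncpoly" where
  "nc_one = (\<lambda>w. if w = [] then 1 else 0)"

definition nc_mul :: "('k::field) ncpoly \<Rightarrow> 'k ncpoly \<Rightarrow> 'k ncpoly" where
  "nc_mul f g = (\<lambda>w. \<Sum>i\<le>length w. f (take i w) * g (drop i w))"

definition nc_var :: "nat \<Rightarrow> ('k::field) ncpoly" where
  "nc_var i = (\<lambda>w. if w = [i] then 1 else 0)"

definition nc_comm :: "('k::field) ncpoly \<Rightarrow> 'k ncpoly \<Rightarrow> 'k ncpoly" where
  "nc_comm a b = nc_add (nc_mul a b) (nc_smult (-1) (nc_mul b a))"

primrec nc_pow :: "('k::field) ncpoly \<Rightarrow> nat \<Rightarrow> 'k ncpoly" where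
  "nc_pow u 0 = nc_one"
| "nc_pow u (Suc n) = nc_mul u (nc_pow u n)"

definition word_subst :: "(nat \<Rightarrow> ('k::field) ncpoly) \<Rightarrow> nat list \<Rightarrow> 'k ncpoly" where
  "word_subst s w = foldr (\<lambda>i acc. nc_mul (s i) acc) w nc_one"

definition nc_subst :: "(nat \<Rightarrow> ('k::field) ncpoly) \<Rightarrow> 'k ncpoly \<Rightarrow> 'k ncpoly" where
  "nc_subst s f = (\<lambda>u. \<Sum>w\<in>{w. f w \<noteq> 0}. f w * word_subst s w u)"

definition is_Tspace :: "('k::field) ncpoly set \<Rightarrow> bool" where
  "is_Tspace V \<longleftrightarrow> V \<subseteq> ncP \<and> nc_zero \<in> V
     \<and> (\<forall>f\<in>V. \<forall>g\<in>V. nc_add f g \<in> V)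
     \<and> (\<forall>c. \<forall>f\<in>V. nc_smult c f \<in> V)
     \<and> (\<forall>s. (\<forall>i. s i \<in> ncP) \<longrightarrow> (\<forall>f\<in>V. nc_subst s f \<in> V))"

text \<open>H^{S_0}: smallest T-space containing H.\<close>
definition Tclosure :: "('k::field) ncpoly set \<Rightarrow> 'k ncpoly set" where
  "Tclosure H = \<Inter>{V. is_Tspace V \<and> H \<subseteq> V}"

definition finitely_based :: "('k::field) ncpoly set \<Rightarrow> bool" where
  "finitely_based V \<longleftrightarrow> (\<exists>H. finite H \<and> H \<subseteq> ncP \<and> V = Tclosure H)"

definition kappa :: "nat \<Rightarrow> ('k::field) ncpoly \<Rightarrow> 'k ncpoly \<Rightarrow> 'k ncpoly" where
  "kappa p u v = nc_mul (nc_comm u v) (nc_mul (nc_pow u (p - 1)) (nc_pow v (p - 1)))"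

text \<open>w_m(u_1,...,u_{2m}) = kappa(u_1,u_2) kappa(u_3,u_4) ... kappa(u_{2m-1},u_{2m}), m \<ge> 1.\<close>
definition w_poly :: "nat \<Rightarrow> nat \<Rightarrow> (nat \<Rightarrow> ('k::field) ncpoly) \<Rightarrow> 'k ncpoly" where
  "w_poly p m u = foldr (\<lambda>r acc. nc_mul (kappa p (u (2*r - 1)) (u (2*r))) acc)
                        (butlast [1..<m+1]) (kappa p (u (2*m - 1)) (u (2*m)))"

definition W_set :: "nat \<Rightarrow> ('k::field) ncpoly set" where
  "W_set p = {w_poly p j (\<lambda>i. nc_var (f i)) | j f.
      j \<ge> 1 \<and> strict_mono_on {1..2*j} f \<and> (\<forall>i\<in>{1..2*j}. f i \<ge> 1)}"

end

theory Submission
  imports Defs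
begin

type_synonym 'k vec = "((nat \<Rightarrow> nat) \<times> nat set) \<Rightarrow> 'k"

definition linop :: "('k::field vec \<Rightarrow> 'k vec) \<Rightarrow> bool" where
  "linop f \<longleftrightarrow> (\<forall>v w. f (\<lambda>x. v x + w x) = (\<lambda>x. f v x + f w x)) \<and> (\<forall>c v. f (\<lambda>x. c * v x) = (\<lambda>x. c * f v x))"

typedef (overloaded) 'k op = "{f :: 'k::field vec \<Rightarrow> 'k vec. linop f}"
  by (rule exI[of _ "\<lambda>v. v"]) (simp add: linop_def)

setup_lifting type_definition_op

lemma linop_add: "linop f \<Longrightarrow> f (\<lambda>x. v x + w x) = (\<lambda>x. f v x + f w x)"
  by (simp add: linop_def)
lemma linop_smult: "linop f \<Longrightarrow> f (\<lambda>x. c * v x) = (\<lambda>x. c * f v x)"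
  by (simp add: linop_def)
lemma linop_zero: "linop f \<Longrightarrow> f (\<lambda>x. 0) = (\<lambda>x. 0)"
  using linop_smult[of f 0 "\<lambda>x. 0"] by simp
lemma linop_neg: "linop f \<Longrightarrow> f (\<lambda>x. - v x) = (\<lambda>x. - f v x)"
  using linop_smult[of f "-1" v] by simp

lemma linop_Rep: "linop (Rep_op X)" using Rep_op by simp

instantiation op :: (field) ring_1
begin
lift_definition zero_op :: "'a op" is "\<lambda>v x. 0" by (simp add: linop_def)
lift_definition one_op :: "'a op" is "\<lambda>v. v" by (simp add: linop_def)
lift_definition plus_op :: "'a op \<Rightarrow> 'a op \<Rightarrow> 'a op" is "\<lambda>f g v x. f v x + g v x"
  by (simp add: linop_def algebra_simps)
lift_definition uminus_op :: "'a op \<Rightarrow> 'a op" is "\<lambda>f v x. - f v x"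
  by (simp add: linop_def algebra_simps)
lift_definition minus_op :: "'a op \<Rightarrow> 'a op \<Rightarrow> 'a op" is "\<lambda>f g v x. f v x - g v x"
  by (simp add: linop_def algebra_simps)
lift_definition times_op :: "'a op \<Rightarrow> 'a op \<Rightarrow> 'a op" is "\<lambda>f g v. f (g v)"
  by (simp add: linop_def)
instance
proof
  fix a b c :: "'a op"
  show "a * b * c = a * (b * c)" by transfer simp
  show "1 * a = a" by transfer simp
  show "a * 1 = a" by transfer simp
  show "a + b + c = a + (b + c)" by transfer (simp add: algebra_simps)
  show "a + b = b + a" by transfer (simp add: algebra_simps)
  show "0 + a = a" by transfer simp
  show "- a + a = 0" by transfer simp
  show "a - b = a + - b" by transfer simp
  show "(a + b) * c = a * c + b * c" by transfer simp
  show "a * (b + c) = a * b + a * c" by transfer (simp add: linop_add)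
  show "(0::'a op) \<noteq> 1"
  proof transfer
    show "(\<lambda>v x. 0::'a) \<noteq> (\<lambda>v. v)"
    proof
      assume "(\<lambda>v x. 0::'a) = (\<lambda>v. v)"
      from arg_cong[OF this, where f="\<lambda>F. F (\<lambda>x. 1) undefined"] show False by simp
    qed
  qed
qed
end

lemma op_eqI: "(\<And>v x. Rep_op X v x = Rep_op Y v x) \<Longrightarrow> X = Y"
  by (metis Rep_op_inject ext)

lemma Rep_plus: "Rep_op (X + Y) v x = Rep_op X v x + Rep_op Y v x" by transfer simp
lemma Rep_minus: "Rep_op (X - Y) v x = Rep_op X v x - Rep_op Y v x" by transfer simp
lemma Rep_uminus: "Rep_op (- X) v x = - Rep_op X v x" by transfer simp
lemma Rep_times: "Rep_op (X * Y) v = Rep_op X (Rep_op Y v)" by transfer simp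
lemma Rep_zero: "Rep_op 0 v x = 0" by transfer simp
lemma Rep_one: "Rep_op 1 v = v" by transfer simp

lift_definition sc :: "'k::field \<Rightarrow> 'k op" is "\<lambda>c v x. c * v x"
  by (simp add: linop_def algebra_simps)

lemma Rep_sc: "Rep_op (sc c) v x = c * v x" by transfer simp

lemma Rep_sc_fun: "Rep_op (sc c) v = (\<lambda>x. c * v x)" by transfer simp

lemma sc_comm: "sc c * X = X * sc c"
  by (rule op_eqI) (simp add: Rep_times Rep_sc_fun linop_smult[OF linop_Rep])

lemma sc_mult: "sc a * sc b = sc (a * b)"
  by (rule op_eqI) (simp add: Rep_times Rep_sc)
lemma sc_add: "sc a + sc b = sc (a + b)"
  by (rule op_eqI) (simp add: Rep_plus Rep_sc algebra_simps)
lemma sc_one: "sc 1 = 1" by (rule op_eqI) (simp add: Rep_one Rep_sc)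
lemma sc_zero: "sc 0 = 0" by (rule op_eqI) (simp add: Rep_zero Rep_sc)
lemma sc_neg: "sc (- a) = - sc a" by (rule op_eqI) (simp add: Rep_uminus Rep_sc)
lemma of_nat_op: "(of_nat n :: 'k::field op) = sc (of_nat n)"
  by (induction n) (simp_all add: sc_zero sc_one flip: sc_add add.commute)

section \<open>Concrete operators\<close>

definition sgnp :: "nat \<Rightarrow> nat set \<Rightarrow> 'k::field" where
  "sgnp i B = (-1) ^ card {c \<in> B. c < i}"

definition Tv :: "nat \<Rightarrow> 'k::field vec \<Rightarrow> 'k vec" where
  "Tv i v = (\<lambda>(a,B). if 0 < a i then v (a(i := a i - 1), B) else 0)"
definition Ev :: "nat \<Rightarrow> 'k::field vec \<Rightarrow> 'k vec" where
  "Ev i v = (\<lambda>(a,B). if finite B \<and> i \<in> B then sgnp i (B - {i}) * v (a, B - {i}) else 0)"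
definition Dv :: "'k::field vec \<Rightarrow> 'k vec" where
  "Dv v = (\<lambda>(a,B). \<Sum>i\<in>B. sgnp i (B - {i}) * of_nat (a i + 1) * v (a(i := a i + 1), B - {i}))"
definition Pv :: "'k::field vec \<Rightarrow> 'k vec" where
  "Pv v = (\<lambda>(a,B). (-1) ^ card B * v (a,B))"

lift_definition T :: "nat \<Rightarrow> 'k::field op" is Tv
  by (auto simp add: linop_def Tv_def fun_eq_iff)
lift_definition E :: "nat \<Rightarrow> 'k::field op" is Ev
  by (auto simp add: linop_def Ev_def fun_eq_iff algebra_simps)
lift_definition D :: "'k::field op" is Dv
  by (auto simp add: linop_def Dv_def fun_eq_iff algebra_simps sum.distrib sum_distrib_left)
lift_definition Pi :: "'k::field op" is Pv
  by (auto simp add: linop_def Pv_def fun_eq_iff algebra_simps)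

lemma Rep_T: "Rep_op (T i) v (a,B) = (if 0 < a i then v (a(i := a i - 1), B) else 0)"
  by transfer (simp add: Tv_def)
lemma Rep_E: "Rep_op (E i) v (a,B) = (if finite B \<and> i \<in> B then sgnp i (B - {i}) * v (a, B - {i}) else 0)"
  by transfer (simp add: Ev_def)
lemma Rep_D: "Rep_op D v (a,B) = (\<Sum>i\<in>B. sgnp i (B - {i}) * of_nat (a i + 1) * v (a(i := a i + 1), B - {i}))"
  by transfer (simp add: Dv_def)
lemma Rep_Pi: "Rep_op Pi v (a,B) = (-1) ^ card B * v (a,B)"
  by transfer (simp add: Pv_def)

lemma op_eqI2: "(\<And>v a B. Rep_op X v (a,B) = Rep_op Y v (a,B)) \<Longrightarrow> X = Y"
  by (rule op_eqI) auto

lemma Pi_Pi: "Pi * Pi = (1::'k::field op)"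
  by (rule op_eqI2) (simp add: Rep_times Rep_Pi Rep_one flip: power_add mult.assoc)

lemma Pi_T: "Pi * T i = T i * (Pi::'k::field op)"
  by (rule op_eqI2) (simp add: Rep_times Rep_Pi Rep_T)

lemma card_Diff1_finite: "finite B \<Longrightarrow> i \<in> B \<Longrightarrow> card (B - {i}) = card B - 1"
  by simp

lemma neg_one_pow_Diff1: "finite B \<Longrightarrow> i \<in> B \<Longrightarrow> ((-1::'k::field) ^ card B) = - ((-1) ^ card (B - {i}))"
proof -
  assume "finite B" "i \<in> B"
  hence "card B = Suc (card (B - {i}))"
    by (metis card_Suc_Diff1)
  thus ?thesis by simp
qed

lemma Pi_E: "Pi * E i = - (E i * (Pi::'k::field op))"
  by (rule op_eqI2) (auto simp add: Rep_times Rep_Pi Rep_E Rep_uminus neg_one_pow_Diff1)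

lemma Pi_D: "Pi * D = - (D * (Pi::'k::field op))"
proof (rule op_eqI2)
  fix v a B
  show "Rep_op (Pi * D) v (a, B) = Rep_op (- (D * (Pi::'k op))) v (a, B)"
  proof (cases "finite B")
    case True
    thus ?thesis
      by (simp add: Rep_times Rep_Pi Rep_D Rep_uminus sum_distrib_left neg_one_pow_Diff1
            mult_ac flip: sum_negf cong: sum.cong)
  next
    case False
    thus ?thesis by (simp add: Rep_times Rep_Pi Rep_D Rep_uminus)
  qed
qed

lemma sgnp_insert: "finite C \<Longrightarrow> j \<notin> C \<Longrightarrow>
   sgnp i (insert j C) = (if j < i then -1 else 1) * (sgnp i C :: 'k::field)"
proof -
  assume f: "finite C" and j: "j \<notin> C"
  show ?thesis
  proof (cases "j < i")
    case True
    hence "{c \<in> insert j C. c < i} = insert j {c \<in> C. c < i}" by auto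
    moreover have "j \<notin> {c \<in> C. c < i}" using j by auto
    ultimately have "card {c \<in> insert j C. c < i} = Suc (card {c \<in> C. c < i})"
      using f by simp
    thus ?thesis using True by (simp add: sgnp_def)
  next
    case False
    hence "{c \<in> insert j C. c < i} = {c \<in> C. c < i}" by auto
    thus ?thesis using False by (simp add: sgnp_def)
  qed
qed

lemma sgnp_swap:
  assumes "finite B" "i \<in> B" "j \<in> B" "i \<noteq> j"
  shows "sgnp i (B - {i}) * sgnp j (B - {i} - {j}) = - (sgnp j (B - {j}) * (sgnp i (B - {j} - {i}) :: 'k::field))"
proof -
  let ?C = "B - {i} - {j}"
  have C: "finite ?C" using assms by simp
  have e1: "B - {i} = insert j ?C" using assms by auto
  have e2: "B - {j} = insert i ?C" using assms by auto
  have e3: "B - {j} - {i} = ?C" by auto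
  have "sgnp i (insert j ?C) = (if j < i then -1 else 1) * (sgnp i ?C :: 'k)"
    using C by (rule sgnp_insert) simp
  note s1 = this[folded e1]
  have "sgnp j (insert i ?C) = (if i < j then -1 else 1) * (sgnp j ?C :: 'k)"
    using C by (rule sgnp_insert) simp
  note s2 = this[folded e2]
  show ?thesis
    unfolding e3 s1 s2 using assms(4) by (cases "i < j") auto
qed

lemma sgnp_sq: "sgnp i B * sgnp i B = (1::'k::field)"
  by (simp add: sgnp_def flip: power_add mult_2)

lemma E_E: "E i * E j = - (E j * (E i::'k::field op))"
proof (rule op_eqI2)
  fix v a B
  show "Rep_op (E i * E j) v (a, B) = Rep_op (- (E j * (E i :: 'k op))) v (a, B)"
  proof (cases "finite B \<and> i \<in> B \<and> j \<in> B \<and> i \<noteq> j")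
    case True
    hence "B - {i} - {j} = B - {j} - {i}" by auto
    moreover have h: "sgnp i (B - {i}) * sgnp j (B - {i} - {j}) = - (sgnp j (B - {j}) * (sgnp i (B - {j} - {i}) :: 'k))"
      using True sgnp_swap[of B i j] by simp
    ultimately show ?thesis using True
      by (simp add: Rep_times Rep_E Rep_uminus mult.assoc[symmetric])
  next
    case False
    thus ?thesis by (auto simp add: Rep_times Rep_E Rep_uminus)
  qed
qed

lemma E_E_same: "E i * E i = (0::'k::field op)"
  by (rule op_eqI2) (simp add: Rep_times Rep_E Rep_zero)

lemma T_T: "T i * T j = T j * (T i::'k::field op)"
proof (rule op_eqI2)
  fix v a B
  show "Rep_op (T i * T j) v (a, B) = Rep_op (T j * (T i :: 'k op)) v (a, B)"
    by (cases "i = j") (auto simp add: Rep_times Rep_T fun_upd_twist)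
qed

lemma T_E: "T i * E j = E j * (T i::'k::field op)"
  by (rule op_eqI2) (auto simp add: Rep_times Rep_T Rep_E)

lemma D_T: "D * T i - T i * D = (E i :: 'k::field op)"
proof (rule op_eqI2)
  fix v :: "'k vec" and a B
  define f where "f j = sgnp j (B - {j}) * of_nat (Suc (a j)) * (if 0 < (a(j := Suc (a j))) i then v ((a(j := Suc (a j)))(i := (a(j := Suc (a j))) i - 1), B - {j}) else 0)" for j
  define g where "g j = (if 0 < a i then sgnp j (B - {j}) * of_nat (Suc ((a(i := a i - 1)) j)) * v ((a(i := a i - 1))(j := Suc ((a(i := a i - 1)) j)), B - {j}) else 0)" for j
  have L: "Rep_op (D * T i) v (a,B) = (\<Sum>j\<in>B. f j)"
    unfolding f_def by (simp add: Rep_times Rep_D Rep_T)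
  have R: "Rep_op (T i * D) v (a,B) = (\<Sum>j\<in>B. g j)"
    unfolding g_def by (cases "0 < a i") (simp_all add: Rep_times Rep_D Rep_T)
  have fg: "f j = g j" if "j \<noteq> i" for j
    using that by (cases "0 < a i") (simp_all add: f_def g_def fun_upd_twist)
  have fgi: "f i - g i = sgnp i (B - {i}) * v (a, B - {i})"
    by (cases "0 < a i") (simp_all add: f_def g_def algebra_simps fun_upd_idem)
  show "Rep_op (D * T i - T i * D) v (a, B) = Rep_op (E i) v (a, B)"
  proof (cases "finite B")
    case False
    thus ?thesis by (simp add: Rep_minus L R Rep_E)
  next
    case True
    have "Rep_op (D * T i - T i * D) v (a, B) = (\<Sum>j\<in>B. f j - g j)"
      by (simp add: Rep_minus L R sum_subtractf)
    also have "\<dots> = (if i \<in> B then f i - g i else 0)"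
    proof (cases "i \<in> B")
      case True
      have "(\<Sum>j\<in>B. f j - g j) = (f i - g i) + (\<Sum>j\<in>B - {i}. f j - g j)"
        using True \<open>finite B\<close> by (simp add: sum.remove)
      also have "(\<Sum>j\<in>B - {i}. f j - g j) = 0"
        by (rule sum.neutral) (simp add: fg)
      finally show ?thesis using True by simp
    next
      case False
      hence "(\<Sum>j\<in>B. f j - g j) = 0"
        by (intro sum.neutral) (metis fg diff_self)
      thus ?thesis using False by simp
    qed
    also have "\<dots> = Rep_op (E i) v (a, B)"
      using True fgi by (simp add: Rep_E)
    finally show ?thesis .
  qed
qed

lemma antisym_double_sum_zero:
  fixes G :: "nat \<Rightarrow> nat \<Rightarrow> 'k::field"
  assumes "\<And>i j. G j i = - G i j" and two: "(2::'k) \<noteq> 0"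
  shows "(\<Sum>i\<in>B. \<Sum>j\<in>B. G i j) = 0"
proof -
  let ?S = "(\<Sum>i\<in>B. \<Sum>j\<in>B. G i j)"
  have "?S = (\<Sum>j\<in>B. \<Sum>i\<in>B. G i j)" by (rule sum.swap)
  also have "\<dots> = (\<Sum>j\<in>B. \<Sum>i\<in>B. - G j i)" by (intro sum.cong refl) (rule assms(1))
  also have "\<dots> = - ?S" by (simp add: sum_negf)
  finally have "2 * ?S = 0" by simp
  thus ?thesis using two by simp
qed

lemma D_D:
  assumes two: "(2::'k::field) \<noteq> 0"
  shows "D * D = (0 :: 'k op)"
proof (rule op_eqI2)
  fix v :: "'k vec" and a B
  define H where "H i j = of_nat (Suc (a i)) * of_nat (Suc (a j)) * v (a(i := Suc (a i), j := Suc (a j)), B - {i} - {j})" for i j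
  define F where "F i j = (sgnp i (B - {i}) * sgnp j (B - {i} - {j})) * H i j" for i j
  define G where "G i j = (if j \<noteq> i \<and> i \<in> B \<and> j \<in> B then F i j else 0)" for i j
  have Hsym: "H j i = H i j" if "i \<noteq> j" for i j
  proof -
    have e: "B - {j} - {i} = B - {i} - {j}" by auto
    show ?thesis unfolding H_def e using that by (simp add: fun_upd_twist)
  qed
  show "Rep_op (D * D) v (a, B) = Rep_op 0 v (a, B)"
  proof (cases "finite B")
    case False
    thus ?thesis by (simp add: Rep_times Rep_D Rep_zero)
  next
    case fin: True
    have "Rep_op (D * D) v (a, B) = (\<Sum>i\<in>B. \<Sum>j\<in>B - {i}. F i j)"
    proof -
      have "Rep_op (D * D) v (a, B) = (\<Sum>i\<in>B. sgnp i (B - {i}) * of_nat (Suc (a i)) *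
          (\<Sum>j\<in>B - {i}. sgnp j (B - {i} - {j}) * of_nat (Suc ((a(i := Suc (a i))) j)) *
             v ((a(i := Suc (a i)))(j := Suc ((a(i := Suc (a i))) j)), B - {i} - {j})))"
        by (simp add: Rep_times Rep_D)
      also have "\<dots> = (\<Sum>i\<in>B. \<Sum>j\<in>B - {i}. F i j)"
      proof (rule sum.cong[OF refl])
        fix i assume "i \<in> B"
        show "sgnp i (B - {i}) * of_nat (Suc (a i)) *
          (\<Sum>j\<in>B - {i}. sgnp j (B - {i} - {j}) * of_nat (Suc ((a(i := Suc (a i))) j)) *
             v ((a(i := Suc (a i)))(j := Suc ((a(i := Suc (a i))) j)), B - {i} - {j})) =
          (\<Sum>j\<in>B - {i}. F i j)"
          unfolding sum_distrib_left
        proof (rule sum.cong[OF refl])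
          fix j assume "j \<in> B - {i}"
          hence "j \<noteq> i" by auto
          thus "sgnp i (B - {i}) * of_nat (Suc (a i)) *
            (sgnp j (B - {i} - {j}) * of_nat (Suc ((a(i := Suc (a i))) j)) *
             v ((a(i := Suc (a i)))(j := Suc ((a(i := Suc (a i))) j)), B - {i} - {j})) = F i j"
            by (simp add: F_def H_def mult_ac)
        qed
      qed
      finally show ?thesis .
    qed
    also have "\<dots> = (\<Sum>i\<in>B. \<Sum>j\<in>B. G i j)"
    proof (rule sum.cong[OF refl])
      fix i assume i: "i \<in> B"
      have "(\<Sum>j\<in>B. G i j) = G i i + (\<Sum>j\<in>B - {i}. G i j)"
        using i fin by (simp add: sum.remove)
      also have "\<dots> = (\<Sum>j\<in>B - {i}. F i j)"
        using i by (simp add: G_def)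
      finally show "(\<Sum>j\<in>B - {i}. F i j) = (\<Sum>j\<in>B. G i j)" by simp
    qed
    also have "\<dots> = 0"
    proof (rule antisym_double_sum_zero[OF _ two])
      fix i j
      show "G j i = - G i j"
      proof (cases "j \<noteq> i \<and> i \<in> B \<and> j \<in> B")
        case True
        have s: "sgnp j (B - {j}) * sgnp i (B - {j} - {i}) = - (sgnp i (B - {i}) * (sgnp j (B - {i} - {j}) :: 'k))"
          using sgnp_swap[of B j i] True fin by simp
        have "F j i = - F i j"
          unfolding F_def s using Hsym[of i j] True by simp
        thus ?thesis using True by (auto simp add: G_def)
      next
        case False
        thus ?thesis by (auto simp add: G_def)
      qed
    qed
    finally show ?thesis by (simp add: Rep_zero)
  qed
qed


section \<open>Parity automorphism and differential\<close>

lemma Pi_Pi_left: "Pi * (Pi * Z) = (Z::'k::field op)"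
  by (simp add: mult.assoc[symmetric] Pi_Pi)

definition theta :: "'k::field op \<Rightarrow> 'k op" where
  "theta X = Pi * X * Pi"

definition dd :: "'k::field op \<Rightarrow> 'k op" where
  "dd X = D * X - theta X * D"

lemma theta_mult: "theta (X * Y) = theta X * theta Y"
  by (simp add: theta_def mult.assoc Pi_Pi_left)
lemma theta_add: "theta (X + Y) = theta X + theta Y"
  by (simp add: theta_def algebra_simps)
lemma theta_diff: "theta (X - Y) = theta X - theta Y"
  by (simp add: theta_def algebra_simps)
lemma theta_uminus: "theta (- X) = - theta X"
  by (simp add: theta_def algebra_simps)
lemma theta_zero: "theta 0 = 0"
  by (simp add: theta_def)
lemma theta_one: "theta 1 = 1"
  by (simp add: theta_def Pi_Pi)
lemma theta_sc: "theta (sc c) = sc c"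
  by (simp add: theta_def sc_comm mult.assoc Pi_Pi Pi_Pi_left)
lemma theta_theta: "theta (theta X) = X"
  by (simp add: theta_def mult.assoc Pi_Pi_left) (simp add: mult.assoc[symmetric] Pi_Pi)
lemma theta_T: "theta (T i) = T i"
  by (simp add: theta_def Pi_T mult.assoc Pi_Pi)
lemma theta_E: "theta (E i) = - E i"
  by (simp add: theta_def Pi_E mult.assoc Pi_Pi)
lemma theta_D: "theta D = - D"
  by (simp add: theta_def Pi_D mult.assoc Pi_Pi)
lemma D_Pi: "D * Pi = - (Pi * (D::'k::field op))"
  by (simp add: Pi_D)

lemma dd_mult: "dd (X * Y) = dd X * Y + theta X * dd Y"
  by (simp add: dd_def theta_mult algebra_simps)
lemma dd_add: "dd (X + Y) = dd X + dd Y"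
  by (simp add: dd_def theta_add algebra_simps)
lemma dd_diff: "dd (X - Y) = dd X - dd Y"
  by (simp add: dd_def theta_diff algebra_simps)
lemma dd_uminus: "dd (- X) = - dd X"
  by (simp add: dd_def theta_uminus algebra_simps)
lemma dd_zero: "dd 0 = 0"
  by (simp add: dd_def theta_zero)
lemma dd_sc: "dd (sc c) = 0"
  by (simp add: dd_def theta_sc sc_comm)
lemma dd_one: "dd 1 = 0"
  by (simp add: dd_def theta_one)
lemma dd_sc_mult: "dd (sc c * X) = sc c * dd X"
  by (simp add: dd_mult dd_sc theta_sc)
lemma dd_T: "dd (T i) = E i"
  by (simp add: dd_def theta_T D_T)

lemma theta_D_mult: "theta (D * X) = - (D * theta X)"
  by (simp add: theta_def mult.assoc[symmetric] Pi_D)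

lemma dd_theta: "dd (theta X) = - theta (dd X)"
proof -
  have "theta (theta X * D) = X * theta D" by (simp add: theta_mult theta_theta)
  thus ?thesis by (simp add: dd_def theta_theta theta_diff theta_D_mult theta_D)
qed

lemma dd_dd:
  assumes two: "(2::'k::field) \<noteq> 0"
  shows "dd (dd X) = (0::'k op)"
proof -
  have DD: "D * D = (0::'k op)" using D_D[OF two] .
  have t: "theta (dd X) = - (D * theta X) + X * D"
    by (simp add: dd_def theta_diff theta_D_mult theta_mult theta_theta theta_D)
  have "dd (dd X) = D * (D * X - theta X * D) - theta (dd X) * D"
    by (simp add: dd_def)
  also have "\<dots> = (D * D) * X - D * theta X * D + D * theta X * D - X * (D * D)"
    unfolding t by (simp add: algebra_simps)
  finally show ?thesis by (simp add: DD)
qed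

section \<open>The functional and degrees\<close>

definition ind :: "(nat \<Rightarrow> nat) \<Rightarrow> nat set \<Rightarrow> 'k::field vec" where
  "ind a0 B0 = (\<lambda>(a,B). if a = a0 \<and> B = B0 then 1 else 0)"

definition astar :: "nat \<Rightarrow> nat \<Rightarrow> nat \<Rightarrow> nat" where
  "astar p n = (\<lambda>i. if i \<in> {1..n} then p - 1 else 0)"

definition lam :: "nat \<Rightarrow> nat \<Rightarrow> 'k::field op \<Rightarrow> 'k" where
  "lam p n X = Rep_op X (ind (\<lambda>_. 0) {}) (astar p n, {1..n})"

lemma lam_add: "lam p n (X + Y) = lam p n X + lam p n Y"
  by (simp add: lam_def Rep_plus)
lemma lam_diff: "lam p n (X - Y) = lam p n X - lam p n Y"
  by (simp add: lam_def Rep_minus)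
lemma lam_uminus: "lam p n (- X) = - lam p n X"
  by (simp add: lam_def Rep_uminus)
lemma lam_zero: "lam p n 0 = 0"
  by (simp add: lam_def Rep_zero)
lemma lam_sc_mult: "lam p n (sc c * X) = c * lam p n X"
  by (simp add: lam_def Rep_times Rep_sc)

lemma Rep_zero_vec: "Rep_op X (\<lambda>x. 0) = (\<lambda>x. 0)"
  using linop_zero[OF linop_Rep] .

lemma D_v0: "Rep_op D (ind (\<lambda>_. 0) {}) = (\<lambda>x. (0::'k::field))"
proof
  fix x :: "(nat \<Rightarrow> nat) \<times> nat set"
  obtain a B where x: "x = (a,B)" by (cases x)
  have "\<And>i. a(i := Suc (a i)) \<noteq> (\<lambda>_. 0)"
  proof
    fix i assume "a(i := Suc (a i)) = (\<lambda>_. 0)"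
    hence "(a(i := Suc (a i))) i = 0" by simp
    thus False by simp
  qed
  thus "Rep_op D (ind (\<lambda>_. 0) {}) x = (0::'k)"
    unfolding x by (simp add: Rep_D ind_def)
qed

lemma lam_dd:
  assumes p: "of_nat p = (0::'k::field)" "1 \<le> p"
  shows "lam p n (dd Y) = (0::'k)"
proof -
  have "lam p n (dd Y) = Rep_op D (Rep_op Y (ind (\<lambda>_. 0) {})) (astar p n, {1..n})"
    by (simp add: lam_def dd_def Rep_minus Rep_times D_v0 Rep_zero_vec)
  also have "\<dots> = 0"
  proof -
    have "\<And>i. i \<in> {1..n} \<Longrightarrow> (of_nat (Suc (astar p n i)) :: 'k) = 0"
      using p by (simp add: astar_def)
    thus ?thesis by (simp add: Rep_D)
  qed
  finally show ?thesis .
qed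


definition supp_card :: "'k::field vec \<Rightarrow> nat \<Rightarrow> bool" where
  "supp_card v r \<longleftrightarrow> (\<forall>a B. v (a,B) \<noteq> 0 \<longrightarrow> finite B \<and> card B = r)"

definition hdeg :: "nat \<Rightarrow> 'k::field op \<Rightarrow> bool" where
  "hdeg k X \<longleftrightarrow> (\<forall>v r. supp_card v r \<longrightarrow> supp_card (Rep_op X v) (r + k))"

lemma hdeg_pw:
  assumes "hdeg k X" "hdeg k Y"
    and "\<And>v a B. Rep_op Z v (a,B) \<noteq> 0 \<Longrightarrow> Rep_op X v (a,B) \<noteq> 0 \<or> Rep_op Y v (a,B) \<noteq> 0"
  shows "hdeg k Z"
  unfolding hdeg_def supp_card_def
proof (intro allI impI)
  fix v :: "'a vec" and r a B
  assume s: "\<forall>a B. v (a, B) \<noteq> 0 \<longrightarrow> finite B \<and> card B = r"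
  assume nz: "Rep_op Z v (a, B) \<noteq> 0"
  have hx: "\<forall>a B. Rep_op X v (a,B) \<noteq> 0 \<longrightarrow> finite B \<and> card B = r + k"
    using assms(1) s unfolding hdeg_def supp_card_def by blast
  have hy: "\<forall>a B. Rep_op Y v (a,B) \<noteq> 0 \<longrightarrow> finite B \<and> card B = r + k"
    using assms(2) s unfolding hdeg_def supp_card_def by blast
  from assms(3)[OF nz] hx hy show "finite B \<and> card B = r + k" by blast
qed

lemma hdeg_add: "hdeg k X \<Longrightarrow> hdeg k Y \<Longrightarrow> hdeg k (X + Y)"
  by (erule hdeg_pw, assumption) (auto simp add: Rep_plus)
lemma hdeg_diff: "hdeg k X \<Longrightarrow> hdeg k Y \<Longrightarrow> hdeg k (X - Y)"
  by (erule hdeg_pw, assumption) (auto simp add: Rep_minus)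
lemma hdeg_uminus: "hdeg k X \<Longrightarrow> hdeg k (- X)"
  by (rule hdeg_pw[where X=X and Y=X]) (auto simp add: Rep_uminus)
lemma hdeg_zero: "hdeg k 0"
  unfolding hdeg_def supp_card_def by (simp add: Rep_zero)
lemma hdeg_sc_mult: "hdeg k X \<Longrightarrow> hdeg k (sc c * X)"
  by (rule hdeg_pw[where X=X and Y=X]) (auto simp add: Rep_times Rep_sc_fun)
lemma hdeg_mult:
  assumes hx: "hdeg k X" and hy: "hdeg l Y" shows "hdeg (k + l) (X * Y)"
  unfolding hdeg_def
proof (intro allI impI)
  fix v :: "'a vec" and r assume "supp_card v r"
  hence "supp_card (Rep_op Y v) (r + l)" using hy unfolding hdeg_def by blast
  hence "supp_card (Rep_op X (Rep_op Y v)) (r + l + k)" using hx unfolding hdeg_def by blast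
  thus "supp_card (Rep_op (X * Y) v) (r + (k + l))" by (simp add: Rep_times add_ac)
qed
lemma hdeg_one: "hdeg 0 1"
  unfolding hdeg_def by (simp add: Rep_one)
lemma hdeg_sc: "hdeg 0 (sc c)"
  using hdeg_sc_mult[OF hdeg_one, of c] by simp
lemma hdeg_T: "hdeg 0 (T i)"
  unfolding hdeg_def supp_card_def
proof (intro allI impI)
  fix v :: "'a vec" and r a B
  assume h: "\<forall>a B. v (a, B) \<noteq> 0 \<longrightarrow> finite B \<and> card B = r"
  assume "Rep_op (T i) v (a, B) \<noteq> 0"
  hence "v (a(i := a i - 1), B) \<noteq> 0" by (simp add: Rep_T split: if_splits)
  with h show "finite B \<and> card B = r + 0" by simp
qed
lemma hdeg_Pi: "hdeg 0 Pi"
  unfolding hdeg_def supp_card_def by (simp add: Rep_Pi)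
lemma hdeg_theta: "hdeg k X \<Longrightarrow> hdeg k (theta X)"
  unfolding theta_def using hdeg_mult[OF hdeg_mult[OF hdeg_Pi], OF _ hdeg_Pi]
  by simp

lemma hdeg_E: "hdeg 1 (E i)"
  unfolding hdeg_def supp_card_def
proof (intro allI impI)
  fix v :: "'a vec" and r a B
  assume h: "\<forall>a B. v (a, B) \<noteq> 0 \<longrightarrow> finite B \<and> card B = r"
  assume "Rep_op (E i) v (a, B) \<noteq> 0"
  hence "finite B" "i \<in> B" "v (a, B - {i}) \<noteq> 0" by (auto simp add: Rep_E split: if_splits)
  with h have "card (B - {i}) = r" by blast
  with \<open>finite B\<close> \<open>i \<in> B\<close> show "finite B \<and> card B = r + 1"
    using card_Suc_Diff1[of B i] by simp
qed

lemma hdeg_D: "hdeg 1 D"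
  unfolding hdeg_def supp_card_def
proof (intro allI impI)
  fix v :: "'a vec" and r a B
  assume h: "\<forall>a B. v (a, B) \<noteq> 0 \<longrightarrow> finite B \<and> card B = r"
  assume nz: "Rep_op D v (a, B) \<noteq> 0"
  hence fin: "finite B" by (auto simp add: Rep_D intro: ccontr)
  from nz obtain i where i: "i \<in> B"
    "sgnp i (B - {i}) * of_nat (a i + 1) * v (a(i := a i + 1), B - {i}) \<noteq> 0"
    unfolding Rep_D by (meson sum.not_neutral_contains_not_neutral)
  hence "v (a(i := a i + 1), B - {i}) \<noteq> 0" by auto
  with h have "card (B - {i}) = r" by blast
  with fin i show "finite B \<and> card B = r + 1"
    using card_Suc_Diff1[of B i] by simp
qed

lemma hdeg_dd0:
  assumes "hdeg 0 X" shows "hdeg 1 (dd X)"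
proof -
  have "hdeg (1 + 0) (D * X)" using hdeg_mult[OF hdeg_D assms] .
  moreover have "hdeg (0 + 1) (theta X * D)" using hdeg_mult[OF hdeg_theta[OF assms] hdeg_D] .
  ultimately show ?thesis unfolding dd_def using hdeg_diff by simp
qed

lemma lam_hdeg: "hdeg k X \<Longrightarrow> k \<noteq> n \<Longrightarrow> lam p n X = 0"
proof -
  assume h: "hdeg k X" and k: "k \<noteq> n"
  have "supp_card (ind (\<lambda>_. 0) {} :: 'a vec) 0"
    by (simp add: supp_card_def ind_def)
  with h have "supp_card (Rep_op X (ind (\<lambda>_. 0) {})) k"
    unfolding hdeg_def by fastforce
  thus ?thesis using k unfolding supp_card_def lam_def by fastforce
qed


section \<open>The supercommutative subalgebra\<close>

inductive C0 :: "'k::field op \<Rightarrow> bool" and C1 :: "'k::field op \<Rightarrow> bool" where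
  C0_T: "C0 (T i)"
| C0_sc: "C0 (sc c)"
| C0_add: "C0 X \<Longrightarrow> C0 Y \<Longrightarrow> C0 (X + Y)"
| C0_mult: "C0 X \<Longrightarrow> C0 Y \<Longrightarrow> C0 (X * Y)"
| C0_odd: "C1 X \<Longrightarrow> C1 Y \<Longrightarrow> C0 (X * Y)"
| C1_E: "C1 (E i)"
| C1_zero: "C1 0"
| C1_add: "C1 X \<Longrightarrow> C1 Y \<Longrightarrow> C1 (X + Y)"
| C1_mult: "C0 X \<Longrightarrow> C1 Y \<Longrightarrow> C1 (X * Y)"
| C1_mult': "C1 X \<Longrightarrow> C0 Y \<Longrightarrow> C1 (X * Y)"

lemma C0_zero: "C0 0" using C0_sc[of 0] by (simp add: sc_zero)
lemma C0_one: "C0 1" using C0_sc[of 1] by (simp add: sc_one)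
lemma C0_uminus: "C0 X \<Longrightarrow> C0 (- X)"
  using C0_mult[OF C0_sc[of "-1"]] by (simp add: sc_neg sc_one)
lemma C1_uminus: "C1 X \<Longrightarrow> C1 (- X)"
  using C1_mult[OF C0_sc[of "-1"]] by (simp add: sc_neg sc_one)
lemma C0_diff: "C0 X \<Longrightarrow> C0 Y \<Longrightarrow> C0 (X - Y)"
  using C0_add[OF _ C0_uminus] by simp
lemma C1_diff: "C1 X \<Longrightarrow> C1 Y \<Longrightarrow> C1 (X - Y)"
  using C1_add[OF _ C1_uminus] by simp
lemma C0_pow: "C0 X \<Longrightarrow> C0 (X ^ k)"
  by (induction k) (simp_all add: C0_one C0_mult)

lemma C_theta:
  "C0 X \<Longrightarrow> theta X = X"
  "C1 X \<Longrightarrow> theta X = - X"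
  by (induction rule: C0_C1.inducts)
     (simp_all add: theta_T theta_sc theta_add theta_mult theta_E theta_zero)

lemma comm_T:
  "C0 X \<Longrightarrow> T i * X = X * T i"
  "C1 X \<Longrightarrow> T i * X = X * T i"
proof (induction rule: C0_C1.inducts)
  case (C0_T j) show ?case by (rule T_T)
next
  case (C0_sc c) show ?case by (rule sc_comm[symmetric])
next
  case (C0_add X Y) thus ?case by (simp add: algebra_simps)
next
  case (C0_mult X Y) thus ?case by (metis mult.assoc)
next
  case (C0_odd X Y) thus ?case by (metis mult.assoc)
next
  case (C1_E j) show ?case by (rule T_E)
next
  case C1_zero show ?case by simp
next
  case (C1_add X Y) thus ?case by (simp add: algebra_simps)
next
  case (C1_mult X Y) thus ?case by (metis mult.assoc)
next
  case (C1_mult' X Y) thus ?case by (metis mult.assoc)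
qed

lemma comm_E:
  "C0 X \<Longrightarrow> E i * X = X * E i"
  "C1 X \<Longrightarrow> E i * X = - (X * E i)"
proof (induction rule: C0_C1.inducts)
  case (C0_T j) show ?case by (rule T_E[symmetric])
next
  case (C0_sc c) show ?case by (rule sc_comm[symmetric])
next
  case (C0_add X Y) thus ?case by (simp add: algebra_simps)
next
  case (C0_mult X Y)
  have "E i * (X * Y) = X * (E i * Y)" by (metis C0_mult.IH(1) mult.assoc)
  thus ?case by (simp add: C0_mult.IH(2) mult.assoc)
next
  case (C0_odd X Y)
  have "E i * (X * Y) = - (X * (E i * Y))" by (metis C0_odd.IH(1) mult.assoc mult_minus_left)
  thus ?case by (simp add: C0_odd.IH(2) mult.assoc)
next
  case (C1_E j) show ?case by (rule E_E)
next
  case C1_zero show ?case by simp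
next
  case (C1_add X Y) thus ?case by (simp add: algebra_simps)
next
  case (C1_mult X Y)
  have "E i * (X * Y) = X * (E i * Y)" by (metis C1_mult.IH(1) mult.assoc)
  thus ?case by (simp add: C1_mult.IH(2) mult.assoc)
next
  case (C1_mult' X Y)
  have "E i * (X * Y) = - (X * (E i * Y))" by (metis C1_mult'.IH(1) mult.assoc mult_minus_left)
  thus ?case by (simp add: C1_mult'.IH(2) mult.assoc)
qed

lemma supercomm_gen:
  "C0 X \<Longrightarrow> (C0 Z \<longrightarrow> X * Z = Z * X) \<and> (C1 Z \<longrightarrow> X * Z = Z * X)"
  "C1 X \<Longrightarrow> (C0 Z \<longrightarrow> X * Z = Z * X) \<and> (C1 Z \<longrightarrow> X * Z = - (Z * X))"
proof (induction rule: C0_C1.inducts)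
  case (C0_T j) show ?case using comm_T by blast
next
  case (C0_sc c) show ?case by (simp add: sc_comm)
next
  case (C0_add X Y) thus ?case by (simp add: algebra_simps)
next
  case (C0_mult X Y)
  show ?case
  proof (intro conjI impI)
    assume "C0 Z" thus "X * Y * Z = Z * (X * Y)" using C0_mult.IH by (metis mult.assoc)
  next
    assume "C1 Z" thus "X * Y * Z = Z * (X * Y)" using C0_mult.IH by (metis mult.assoc)
  qed
next
  case (C0_odd X Y)
  show ?case
  proof (intro conjI impI)
    assume "C0 Z" thus "X * Y * Z = Z * (X * Y)" using C0_odd.IH by (metis mult.assoc)
  next
    assume z: "C1 Z"
    have "X * Y * Z = - (X * (Z * Y))" using C0_odd.IH z by (simp add: mult.assoc)
    also have "\<dots> = - (X * Z * Y)" by (simp add: mult.assoc)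
    also have "\<dots> = Z * X * Y" using C0_odd.IH z by simp
    finally show "X * Y * Z = Z * (X * Y)" by (simp add: mult.assoc)
  qed
next
  case (C1_E j) show ?case using comm_E by (metis minus_minus)
next
  case C1_zero show ?case by simp
next
  case (C1_add X Y) thus ?case by (simp add: algebra_simps)
next
  case (C1_mult X Y)
  show ?case
  proof (intro conjI impI)
    assume "C0 Z" thus "X * Y * Z = Z * (X * Y)" using C1_mult.IH by (metis mult.assoc)
  next
    assume z: "C1 Z"
    have "X * Y * Z = X * (Y * Z)" by (simp add: mult.assoc)
    also have "\<dots> = - (X * Z * Y)" using C1_mult.IH(2) z by (simp add: mult.assoc)
    also have "\<dots> = - (Z * X * Y)" using C1_mult.IH(1) z by simp
    finally show "X * Y * Z = - (Z * (X * Y))" by (simp add: mult.assoc)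
  qed
next
  case (C1_mult' X Y)
  show ?case
  proof (intro conjI impI)
    assume "C0 Z" thus "X * Y * Z = Z * (X * Y)" using C1_mult'.IH by (metis mult.assoc)
  next
    assume z: "C1 Z"
    have "X * Y * Z = X * (Z * Y)" using C1_mult'.IH z by (simp add: mult.assoc)
    also have "\<dots> = - (Z * X * Y)" using C1_mult'.IH z by (simp add: mult.assoc[symmetric])
    finally show "X * Y * Z = - (Z * (X * Y))" by (simp add: mult.assoc)
  qed
qed

lemma comm0: "C0 X \<Longrightarrow> C0 Z \<or> C1 Z \<Longrightarrow> X * Z = Z * X"
  using supercomm_gen(1) by blast
lemma comm0': "C0 X \<Longrightarrow> C0 Z \<or> C1 Z \<Longrightarrow> Z * X = X * Z"
  using supercomm_gen(1) by metis
lemma anticomm1: "C1 X \<Longrightarrow> C1 Z \<Longrightarrow> X * Z = - (Z * X)"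
  using supercomm_gen(2) by blast

lemma op_two_cancel:
  assumes two: "(2::'k::field) \<noteq> 0" and h: "Y + Y = (0::'k op)"
  shows "Y = 0"
proof -
  have "sc (2::'k) = 1 + 1" by (metis one_add_one sc_add sc_one)
  hence "sc 2 * Y = Y + Y" by (simp add: mult_2)
  hence "sc (1/2) * (sc 2 * Y) = 0" using h by simp
  hence "sc ((1/2) * 2) * Y = 0" by (simp add: mult.assoc[symmetric] sc_mult)
  thus ?thesis using two by (simp add: sc_one)
qed

lemma odd_sq:
  assumes two: "(2::'k::field) \<noteq> 0" and "C1 X"
  shows "X * X = (0::'k op)"
proof -
  have h: "X * X = - (X * X)" using anticomm1[OF assms(2) assms(2)] .
  have "X * X + X * X = 0" by (subst h) simp
  thus ?thesis using op_two_cancel[OF two] by blast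
qed

lemma odd_odd_sq:
  assumes two: "(2::'k::field) \<noteq> 0" and "C1 X" "C1 Y"
  shows "(X * Y) * (X * Y) = (0::'k op)"
proof -
  have "(X * Y) * (X * Y) = X * (Y * X) * Y" by (simp add: mult.assoc)
  also have "\<dots> = - (X * X * (Y * Y))" using anticomm1[OF assms(3) assms(2)] by (simp add: mult.assoc)
  also have "\<dots> = 0" using odd_sq[OF two assms(2)] by simp
  finally show ?thesis .
qed

lemma C_dd:
  assumes two: "(2::'k::field) \<noteq> 0"
  shows "C0 X \<Longrightarrow> C1 (dd X)" "C1 X \<Longrightarrow> C0 (dd (X::'k op))"
proof (induction rule: C0_C1.inducts)
  case (C0_T i) show ?case by (simp add: dd_T C1_E)
next
  case (C0_sc c) show ?case by (simp add: dd_sc C1_zero)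
next
  case (C0_add X Y) thus ?case by (simp add: dd_add C1_add)
next
  case (C0_mult X Y) thus ?case
    by (simp add: dd_mult C_theta C1_add C1_mult C1_mult')
next
  case (C0_odd X Y) thus ?case
    by (simp add: dd_mult C_theta C1_diff C1_mult C1_mult')
next
  case (C1_E i)
  have "dd (E i) = (0::'k op)" using dd_dd[OF two, of "T i"] by (simp add: dd_T)
  thus ?case by (simp add: C0_zero)
next
  case C1_zero show ?case by (simp add: dd_zero C0_zero)
next
  case (C1_add X Y) thus ?case by (simp add: dd_add C0_add)
next
  case (C1_mult X Y) thus ?case
    by (simp add: dd_mult C_theta C0_add C0_mult C0_odd)
next
  case (C1_mult' X Y) thus ?case
    by (simp add: dd_mult C_theta C0_diff C0_mult C0_odd)
qed

section \<open>Pure part, decomposition, beta\<close>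

inductive Apure :: "'k::field op \<Rightarrow> bool" where
  A_T: "Apure (T i)"
| A_sc: "Apure (sc c)"
| A_add: "Apure X \<Longrightarrow> Apure Y \<Longrightarrow> Apure (X + Y)"
| A_mult: "Apure X \<Longrightarrow> Apure Y \<Longrightarrow> Apure (X * Y)"

lemma Apure_C0: "Apure X \<Longrightarrow> C0 X"
  by (induction rule: Apure.induct) (simp_all add: C0_T C0_sc C0_add C0_mult)

lemma Apure_hdeg: "Apure X \<Longrightarrow> hdeg 0 X"
  by (induction rule: Apure.induct) (auto simp add: hdeg_T hdeg_sc hdeg_add dest: hdeg_mult)

lemma Apure_zero: "Apure 0" using A_sc[of 0] by (simp add: sc_zero)
lemma Apure_one: "Apure 1" using A_sc[of 1] by (simp add: sc_one)
lemma Apure_pow: "Apure X \<Longrightarrow> Apure (X ^ k)"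
  by (induction k) (simp_all add: Apure_one A_mult)

inductive G0 :: "'k::field op \<Rightarrow> bool" where
  G0_A: "Apure P \<Longrightarrow> G0 P"
| G0_Z: "G0 X \<Longrightarrow> C0 Z \<Longrightarrow> Z * Z = 0 \<Longrightarrow> G0 (X + Z)"

lemma G0_C0: "G0 X \<Longrightarrow> C0 X"
  by (induction rule: G0.induct) (simp_all add: Apure_C0 C0_add)

lemma sqzero_mult:
  assumes "C0 X" "C0 Z" "Z * Z = 0"
  shows "(X * Z) * (X * Z) = 0" "(Z * X) * (Z * X) = 0"
proof -
  have c: "X * Z = Z * X" using comm0[OF assms(1)] assms(2) by blast
  have "(X * Z) * (X * Z) = X * X * (Z * Z)" using c by (simp add: mult.assoc) (metis mult.assoc)
  thus "(X * Z) * (X * Z) = 0" using assms(3) by simp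
  thus "(Z * X) * (Z * X) = 0" using c by simp
qed

lemma G0_add_A: "G0 X \<Longrightarrow> Apure P \<Longrightarrow> G0 (X + P)"
proof (induction rule: G0.induct)
  case (G0_A Q) thus ?case by (simp add: A_add G0.G0_A)
next
  case (G0_Z X Z)
  have "G0 ((X + P) + Z)" by (rule G0.G0_Z[OF G0_Z.IH[OF G0_Z.prems] G0_Z.hyps(2,3)])
  thus ?case by (simp add: algebra_simps)
qed

lemma G0_add: "G0 Y \<Longrightarrow> G0 X \<Longrightarrow> G0 (X + Y)"
proof (induction rule: G0.induct)
  case (G0_A P) thus ?case using G0_add_A by blast
next
  case (G0_Z Y Z)
  have "G0 ((X + Y) + Z)" by (rule G0.G0_Z[OF G0_Z.IH[OF G0_Z.prems] G0_Z.hyps(2,3)])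
  thus ?case by (simp add: algebra_simps)
qed

lemma G0_mult_A: "G0 X \<Longrightarrow> Apure P \<Longrightarrow> G0 (X * P)"
proof (induction rule: G0.induct)
  case (G0_A Q) thus ?case by (simp add: A_mult G0.G0_A)
next
  case (G0_Z X Z)
  have "(X + Z) * P = X * P + Z * P" by (simp add: algebra_simps)
  moreover have "C0 (Z * P)" using G0_Z Apure_C0 C0_mult by blast
  moreover have "(Z * P) * (Z * P) = 0" using sqzero_mult(2)[OF Apure_C0 G0_Z.hyps(2,3)] G0_Z.prems by blast
  ultimately show ?case using G0.G0_Z[OF G0_Z.IH[OF G0_Z.prems]] by simp
qed

lemma G0_mult: "G0 Y \<Longrightarrow> G0 X \<Longrightarrow> G0 (X * Y)"
proof (induction rule: G0.induct)
  case (G0_A P) thus ?case using G0_mult_A by blast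
next
  case (G0_Z Y Z)
  have "X * (Y + Z) = X * Y + X * Z" by (simp add: algebra_simps)
  moreover have "C0 (X * Z)" using G0_Z G0_C0 C0_mult by blast
  moreover have "(X * Z) * (X * Z) = 0" using sqzero_mult(1)[OF G0_C0 G0_Z.hyps(2,3)] G0_Z.prems by blast
  ultimately show ?case using G0.G0_Z[OF G0_Z.IH[OF G0_Z.prems]] by simp
qed

lemma C0_G0:
  assumes two: "(2::'k::field) \<noteq> 0"
  shows "C0 X \<Longrightarrow> G0 (X::'k op)" "C1 X \<Longrightarrow> C1 X"
proof (induction rule: C0_C1.inducts)
  case (C0_T i) show ?case by (simp add: G0_A A_T)
next
  case (C0_sc c) show ?case by (simp add: G0_A A_sc)
next
  case (C0_add X Y) thus ?case by (simp add: G0_add)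
next
  case (C0_mult X Y) thus ?case by (simp add: G0_mult)
next
  case (C0_odd X Y)
  have "G0 (0 + X * Y)"
    by (rule G0_Z) (simp_all add: G0_A Apure_zero C0_C1.C0_odd C0_odd odd_odd_sq[OF two])
  thus ?case by simp
qed (simp_all add: C0_C1.intros)

definition beta :: "nat \<Rightarrow> 'k::field op \<Rightarrow> 'k op" where
  "beta p Q = Q ^ (p - 1) * dd Q"

lemma of_nat_op_comm: "of_nat m * X = X * (of_nat m :: 'k::field op)"
  by (simp add: of_nat_op sc_comm)

lemma C0_powcomm: "C0 X \<Longrightarrow> C0 Z \<or> C1 Z \<Longrightarrow> X ^ k * Z = Z * X ^ k"
  using comm0[OF C0_pow] by blast

lemma dd_pow:
  assumes two: "(2::'k::field) \<noteq> 0" and X: "C0 (X::'k op)"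
  shows "dd (X ^ Suc m) = of_nat (Suc m) * X ^ m * dd X"
proof (induction m)
  case 0 show ?case by simp
next
  case (Suc m)
  have c1: "C1 (dd X)" using C_dd(1)[OF two X] .
  have "dd (X ^ Suc (Suc m)) = dd (X * X ^ Suc m)" by (simp only: power_Suc)
  also have "\<dots> = dd X * X ^ Suc m + X * dd (X ^ Suc m)" by (simp only: dd_mult C_theta(1)[OF X])
  also have "dd X * X ^ Suc m = X ^ Suc m * dd X"
    using C0_powcomm[OF X] c1 by metis
  also have "X * dd (X ^ Suc m) = of_nat (Suc m) * X ^ Suc m * dd X"
  proof -
    have "X * dd (X ^ Suc m) = (X * of_nat (Suc m)) * X ^ m * dd X" unfolding Suc by (simp only: mult.assoc)
    also have "X * of_nat (Suc m) = of_nat (Suc m) * X" by (rule of_nat_op_comm[symmetric])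
    finally show ?thesis by (simp only: power_Suc mult.assoc)
  qed
  finally show ?case by (simp add: algebra_simps)
qed

lemma pow_sqzero:
  assumes c: "R * Z = Z * R" and z: "Z * Z = 0"
  shows "(R + Z) ^ Suc m = R ^ Suc m + of_nat (Suc m) * R ^ m * (Z::'k::field op)"
proof (induction m)
  case 0 show ?case by simp
next
  case (Suc m)
  have cp: "R ^ k * Z = Z * R ^ k" for k
  proof (induction k)
    case 0 show ?case by simp
  next
    case (Suc k)
    have "R ^ Suc k * Z = R * (R ^ k * Z)" by (simp add: mult.assoc)
    also have "\<dots> = (R * Z) * R ^ k" using Suc by (simp add: mult.assoc)
    also have "\<dots> = Z * R ^ Suc k" using c by (simp add: mult.assoc)
    finally show ?case .
  qed
  have "(R + Z) ^ Suc (Suc m) = (R + Z) * (R ^ Suc m + of_nat (Suc m) * R ^ m * Z)"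
    using Suc by (simp del: power_Suc) (simp add: power_Suc)
  also have "\<dots> = R ^ Suc (Suc m) + of_nat (Suc m) * R ^ Suc m * Z + Z * R ^ Suc m
      + of_nat (Suc m) * (Z * R ^ m * Z)"
    by (simp add: algebra_simps of_nat_op_comm)
  also have "Z * R ^ m * Z = 0"
  proof -
    have "Z * R ^ m * Z = (Z * Z) * R ^ m" using cp[of m] by (simp add: mult.assoc)
    thus ?thesis using z by simp
  qed
  also have "Z * R ^ Suc m = R ^ Suc m * Z" using cp[of "Suc m"] by (rule sym)
  finally show ?case by (simp add: algebra_simps)
qed

lemma beta_add_sqzero:
  assumes two: "(2::'k::field) \<noteq> 0" and p: "2 \<le> p"
    and R: "C0 R" and Z: "C0 Z" and z: "Z * Z = 0"
  shows "beta p (R + Z) = beta p R + dd (R ^ (p - 1) * (Z::'k op))"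
proof -
  define q where "q = p - 2"
  have q: "p - 1 = Suc q" using p unfolding q_def by arith
  have c: "R * Z = Z * R" using comm0[OF R] Z by blast
  have dR: "C1 (dd R)" and dZ: "C1 (dd Z)" using C_dd(1)[OF two] R Z by blast+
  have zdz: "Z * dd Z = 0"
  proof -
    have "0 = dd (Z * Z)" using z by (simp add: dd_zero)
    also have "\<dots> = dd Z * Z + Z * dd Z" by (simp only: dd_mult C_theta(1)[OF Z])
    also have "dd Z * Z = Z * dd Z" using comm0[OF Z] dZ by metis
    finally have "Z * dd Z + Z * dd Z = 0" by simp
    thus ?thesis using op_two_cancel[OF two] by blast
  qed
  have pw: "(R + Z) ^ Suc q = R ^ Suc q + of_nat (Suc q) * R ^ q * Z"
    using pow_sqzero[OF c z] .
  have ddpow: "dd (R ^ Suc q) = of_nat (Suc q) * R ^ q * dd R"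
    using dd_pow[OF two R] .
  have cRq: "Z * dd R = dd R * Z" using comm0[OF Z] dR by metis
  let ?A = "R ^ Suc q" and ?c = "of_nat (Suc q) :: 'k op"
  have "beta p (R + Z) = (?A + ?c * R ^ q * Z) * (dd R + dd Z)"
    unfolding beta_def q pw by (simp only: dd_add)
  also have "\<dots> = ?A * dd R + ?A * dd Z + ?c * R ^ q * (Z * dd R) + ?c * R ^ q * (Z * dd Z)"
    by (simp add: distrib_left distrib_right mult.assoc add_ac)
  also have "\<dots> = ?A * dd R + (?c * R ^ q * dd R * Z + ?A * dd Z)"
    unfolding zdz cRq by (simp add: mult.assoc add_ac)
  also have "?c * R ^ q * dd R * Z + ?A * dd Z = dd (?A * Z)"
    by (simp only: dd_mult ddpow C_theta(1)[OF C0_pow[OF R]])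
  finally show ?thesis unfolding beta_def q .
qed

lemma beta_G0:
  assumes two: "(2::'k::field) \<noteq> 0" and p: "2 \<le> p"
  shows "G0 Q \<Longrightarrow> \<exists>P \<eta>. Apure P \<and> beta p Q = beta p P + dd (\<eta>::'k op)"
proof (induction rule: G0.induct)
  case (G0_A P)
  show ?case by (rule exI[of _ P], rule exI[of _ 0]) (simp add: G0_A dd_zero)
next
  case (G0_Z X Z)
  then obtain P \<eta> where P: "Apure P" "beta p X = beta p P + dd \<eta>" by blast
  have "beta p (X + Z) = beta p X + dd (X ^ (p - 1) * Z)"
    by (rule beta_add_sqzero[OF two p G0_C0[OF G0_Z.hyps(1)] G0_Z.hyps(2,3)])
  also have "\<dots> = beta p P + dd (\<eta> + X ^ (p - 1) * Z)" using P by (simp add: dd_add)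
  finally show ?case using P by blast
qed

lemma beta_pure_hdeg: "Apure P \<Longrightarrow> hdeg 1 (beta p P)"
  unfolding beta_def
  using hdeg_mult[OF Apure_hdeg[OF Apure_pow] hdeg_dd0[OF Apure_hdeg]] by simp

lemma beta_closed:
  assumes two: "(2::'k::field) \<noteq> 0" and p: "2 \<le> p" and R: "C0 (R::'k op)"
  shows "dd (beta p R) = 0"
proof -
  define q where "q = p - 2"
  have q: "p - 1 = Suc q" using p unfolding q_def by arith
  have dR: "C1 (dd R)" using C_dd(1)[OF two R] .
  have "dd (beta p R) = of_nat (Suc q) * R ^ q * (dd R * dd R) + R ^ Suc q * dd (dd R)"
    unfolding beta_def q
    by (simp add: dd_mult dd_pow[OF two R] C_theta(1)[OF C0_pow[OF R]] mult.assoc del: power_Suc)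
  thus ?thesis using odd_sq[OF two dR] dd_dd[OF two] by simp
qed

section \<open>Good elements and kappa\<close>

definition good :: "'k::field op \<Rightarrow> bool" where
  "good X \<longleftrightarrow> (\<exists>Q. C0 Q \<and> X = Q + dd Q)"

lemma good_zero: "good 0"
  unfolding good_def by (rule exI[of _ 0]) (simp add: C0_zero dd_zero)
lemma good_sc: "good (sc c)"
  unfolding good_def by (rule exI[of _ "sc c"]) (simp add: C0_sc dd_sc)
lemma good_one: "good 1"
  using good_sc[of 1] by (simp add: sc_one)
lemma good_add:
  assumes "good X" "good Y" shows "good (X + Y)"
proof -
  obtain Q where Q: "C0 Q" "X = Q + dd Q" using assms(1) good_def by blast
  obtain R where R: "C0 R" "Y = R + dd R" using assms(2) good_def by blast
  have "X + Y = (Q + R) + dd (Q + R)" unfolding Q(2) R(2) dd_add by (simp add: add_ac)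
  thus ?thesis unfolding good_def using C0_add[OF Q(1) R(1)] by blast
qed
lemma good_T_E: "good (T i + E i)"
  unfolding good_def by (rule exI[of _ "T i"]) (simp add: C0_T dd_T)

lemma good_mult:
  assumes two: "(2::'k::field) \<noteq> 0" and gx: "good X" and gy: "good (Y::'k op)"
  shows "good (X * Y)"
proof -
  obtain Q where Q: "C0 Q" "X = Q + dd Q" using gx unfolding good_def by blast
  obtain R where R: "C0 R" "Y = R + dd R" using gy unfolding good_def by blast
  have dQ: "C1 (dd Q)" using C_dd(1)[OF two Q(1)] .
  have dR: "C1 (dd R)" using C_dd(1)[OF two R(1)] .
  let ?Q' = "Q * R + dd Q * dd R"
  have C: "C0 ?Q'" by (rule C0_add[OF C0_mult[OF Q(1) R(1)] C0_odd[OF dQ dR]])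
  have e1: "dd ?Q' = dd Q * R + Q * dd R"
  proof -
    have a: "dd (Q * R) = dd Q * R + Q * dd R" by (simp only: dd_mult C_theta(1)[OF Q(1)])
    have b: "dd (dd Q * dd R) = 0" by (simp only: dd_mult dd_dd[OF two] mult_zero_left mult_zero_right add_0)
    show ?thesis by (simp only: dd_add a b add_0_right)
  qed
  have e2: "X * Y = ?Q' + (dd Q * R + Q * dd R)"
    unfolding Q(2) R(2) by (simp add: distrib_left distrib_right add_ac)
  have "X * Y = ?Q' + dd ?Q'" unfolding e2 e1 ..
  thus ?thesis unfolding good_def using C by blast
qed

lemma good_sc_mult: "(2::'k::field) \<noteq> 0 \<Longrightarrow> good X \<Longrightarrow> good (sc c * (X::'k op))"
  using good_mult good_sc by blast

definition kop :: "nat \<Rightarrow> 'k::field op \<Rightarrow> 'k op \<Rightarrow> 'k op" where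
  "kop p X Y = (X * Y - Y * X) * (X ^ (p - 1) * Y ^ (p - 1))"

lemma kop_good:
  assumes two: "(2::'k::field) \<noteq> 0" and p: "2 \<le> p"
    and Q: "C0 Q" and R: "C0 R"
  shows "kop p (Q + dd Q) (R + dd R) = 2 * (beta p Q * beta p (R::'k op))"
proof -
  let ?O = "dd Q" and ?U = "dd R"
  have O: "C1 ?O" and U: "C1 ?U" using C_dd(1)[OF two] Q R by blast+
  let ?X = "Q + ?O" and ?Y = "R + ?U"
  have cQR: "Q * R = R * Q" using comm0[OF Q] R by blast
  have cQU: "Q * ?U = ?U * Q" using comm0[OF Q] U by blast
  have cRO: "R * ?O = ?O * R" using comm0[OF R] O by blast
  have aOU: "?U * ?O = - (?O * ?U)" using anticomm1[OF U O] .
  have OO: "?O * ?O = 0" using odd_sq[OF two O] .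
  have UU: "?U * ?U = 0" using odd_sq[OF two U] .
  have comm: "?X * ?Y - ?Y * ?X = 2 * (?O * ?U)"
  proof -
    have "?X * ?Y - ?Y * ?X = (Q * R - R * Q) + (Q * ?U - ?U * Q) + (?O * R - R * ?O) + (?O * ?U - ?U * ?O)"
      by (simp add: algebra_simps)
    also have "\<dots> = ?O * ?U + ?O * ?U" using cQR cQU cRO aOU by simp
    finally show ?thesis by (simp add: mult_2)
  qed
  have s1: "?O * ?U * ?X ^ k = ?O * ?U * Q ^ k" for k
  proof (induction k)
    case 0 show ?case by simp
  next
    case (Suc k)
    have "?O * ?U * ?X ^ Suc k = ?O * ?U * ?X ^ k * ?X" by (simp only: power_Suc2 mult.assoc)
    also have "\<dots> = ?O * ?U * Q ^ k * Q + ?O * ?U * Q ^ k * ?O" using Suc by (simp add: distrib_left)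
    also have "?O * ?U * Q ^ k * ?O = 0"
    proof -
      have "Q ^ k * ?O = ?O * Q ^ k" using C0_powcomm[OF Q] O by blast
      hence "?O * ?U * Q ^ k * ?O = ?O * (?U * ?O) * Q ^ k" by (simp add: mult.assoc)
      also have "\<dots> = - (?O * ?O * ?U * Q ^ k)" using aOU by (simp add: mult.assoc)
      finally show ?thesis using OO by simp
    qed
    finally show ?case by (simp only: power_Suc2 mult.assoc add_0_right)
  qed
  have s2: "?O * ?U * Q ^ (p - 1) * ?Y ^ k = ?O * ?U * Q ^ (p - 1) * R ^ k" for k
  proof (induction k)
    case 0 show ?case by simp
  next
    case (Suc k)
    have "?O * ?U * Q ^ (p - 1) * ?Y ^ Suc k = ?O * ?U * Q ^ (p - 1) * ?Y ^ k * ?Y" by (simp only: power_Suc2 mult.assoc)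
    also have "\<dots> = ?O * ?U * Q ^ (p - 1) * R ^ k * R + ?O * ?U * Q ^ (p - 1) * R ^ k * ?U" using Suc by (simp add: distrib_left)
    also have "?O * ?U * Q ^ (p - 1) * R ^ k * ?U = 0"
    proof -
      have cQ: "Q ^ (p - 1) * ?U = ?U * Q ^ (p - 1)" using C0_powcomm[OF Q] U by blast
      have cR: "R ^ k * ?U = ?U * R ^ k" using C0_powcomm[OF R] U by blast
      have "?O * ?U * Q ^ (p - 1) * R ^ k * ?U = ?O * ?U * (Q ^ (p - 1) * (R ^ k * ?U))" by (simp only: mult.assoc)
      also have "\<dots> = ?O * ?U * ((Q ^ (p - 1) * ?U) * R ^ k)" by (simp only: cR mult.assoc)
      also have "\<dots> = ?O * ?U * ((?U * Q ^ (p - 1)) * R ^ k)" by (simp only: cQ)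
      also have "\<dots> = (?O * (?U * ?U)) * Q ^ (p - 1) * R ^ k" by (simp only: mult.assoc)
      finally show ?thesis using UU by simp
    qed
    finally show ?case by (simp only: power_Suc2 mult.assoc add_0_right)
  qed
  have "kop p ?X ?Y = 2 * (?O * ?U * ?X ^ (p - 1) * ?Y ^ (p - 1))"
    unfolding kop_def comm by (simp add: mult.assoc)
  also have "\<dots> = 2 * (?O * ?U * Q ^ (p - 1) * R ^ (p - 1))" using s1 s2 by simp
  also have "?O * ?U * Q ^ (p - 1) * R ^ (p - 1) = beta p Q * beta p R"
  proof -
    have c1: "Q ^ (p - 1) * ?O = ?O * Q ^ (p - 1)" using C0_powcomm[OF Q] O by blast
    have c2: "R ^ (p - 1) * ?U = ?U * R ^ (p - 1)" using C0_powcomm[OF R] U by blast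
    have c3: "Q ^ (p - 1) * ?U = ?U * Q ^ (p - 1)" using C0_powcomm[OF Q] U by blast
    have "beta p Q * beta p R = ?O * (Q ^ (p - 1) * R ^ (p - 1) * ?U)"
      unfolding beta_def using c1 c2 by (simp add: mult.assoc)
    also have "Q ^ (p - 1) * R ^ (p - 1) * ?U = ?U * Q ^ (p - 1) * R ^ (p - 1)"
      using c2 c3 by (metis mult.assoc)
    finally show ?thesis by (simp add: mult.assoc)
  qed
  finally show ?thesis .
qed

section \<open>Products and vanishing\<close>

lemma closed_exact_mult:
  assumes two: "(2::'k::field) \<noteq> 0" and c1: "dd g1 = 0" and c2: "dd g2 = (0::'k op)"
  shows "(g1 + dd e1) * (g2 + dd e2) = g1 * g2 + dd (theta g1 * e2 + e1 * g2 + e1 * dd e2)"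
    and "dd (g1 * g2) = 0"
proof -
  have a: "dd (theta g1 * e2) = g1 * dd e2"
    by (simp add: dd_mult dd_theta c1 theta_zero theta_theta)
  have b: "dd (e1 * g2) = dd e1 * g2" by (simp add: dd_mult c2)
  have c: "dd (e1 * dd e2) = dd e1 * dd e2" by (simp add: dd_mult dd_dd[OF two])
  show "(g1 + dd e1) * (g2 + dd e2) = g1 * g2 + dd (theta g1 * e2 + e1 * g2 + e1 * dd e2)"
    unfolding dd_add a b c by (simp add: distrib_left distrib_right add_ac)
  show "dd (g1 * g2) = 0" by (simp add: dd_mult c1 c2)
qed

lemma prod_closed_exact:
  assumes two: "(2::'k::field) \<noteq> 0" and cl: "\<forall>x\<in>set xs. dd (g x) = (0::'k op)"
  shows "\<exists>H. prod_list (map (\<lambda>x. g x + dd (e x)) xs) = prod_list (map g xs) + dd H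
           \<and> dd (prod_list (map g xs)) = 0"
  using cl
proof (induction xs)
  case Nil show ?case by (rule exI[of _ 0]) (simp add: dd_zero dd_one)
next
  case (Cons x xs)
  then obtain H where H: "prod_list (map (\<lambda>x. g x + dd (e x)) xs) = prod_list (map g xs) + dd H"
    and c: "dd (prod_list (map g xs)) = 0" by auto
  have cx: "dd (g x) = 0" using Cons.prems by simp
  show ?case
    using closed_exact_mult(1)[OF two cx c, of "e x" H] closed_exact_mult(2)[OF two cx c] H by auto
qed

lemma hdeg_prod_list:
  "\<forall>x\<in>set xs. hdeg k (g x) \<Longrightarrow> hdeg (k * length xs) (prod_list (map g xs))"
proof (induction xs)
  case Nil show ?case by (simp add: hdeg_one)
next
  case (Cons x xs)
  hence "hdeg (k + k * length xs) (g x * prod_list (map g xs))"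
    by (intro hdeg_mult) auto
  thus ?case by simp
qed

lemma kop_split:
  assumes two: "(2::'k::field) \<noteq> 0" and p: "2 \<le> p"
    and gx: "good X" and gy: "good (Y::'k op)"
  shows "\<exists>\<gamma> \<epsilon>. kop p X Y = \<gamma> + dd \<epsilon> \<and> dd \<gamma> = 0 \<and> hdeg 2 \<gamma>"
proof -
  obtain Q where Q: "C0 Q" "X = Q + dd Q" using gx unfolding good_def by blast
  obtain R where R: "C0 R" "Y = R + dd R" using gy unfolding good_def by blast
  obtain P1 e1 where P1: "Apure P1" "beta p Q = beta p P1 + dd e1"
    using beta_G0[OF two p C0_G0(1)[OF two Q(1)]] by blast
  obtain P2 e2 where P2: "Apure P2" "beta p R = beta p P2 + dd e2"
    using beta_G0[OF two p C0_G0(1)[OF two R(1)]] by blast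
  let ?g1 = "2 * beta p P1" and ?g2 = "beta p P2"
  have c1: "dd ?g1 = 0"
    using beta_closed[OF two p Apure_C0[OF P1(1)]] by (simp add: mult_2 dd_add)
  have c2: "dd ?g2 = 0" using beta_closed[OF two p Apure_C0[OF P2(1)]] .
  have "kop p X Y = 2 * (beta p Q * beta p R)"
    unfolding Q(2) R(2) by (rule kop_good[OF two p Q(1) R(1)])
  also have "\<dots> = (?g1 + dd (2 * e1)) * (?g2 + dd e2)"
    unfolding P1(2) P2(2) by (simp add: mult_2 dd_add distrib_left distrib_right add_ac)
  also have "\<dots> = ?g1 * ?g2 + dd (theta ?g1 * e2 + 2 * e1 * ?g2 + 2 * e1 * dd e2)"
    by (rule closed_exact_mult(1)[OF two c1 c2])
  finally have eq: "kop p X Y = ?g1 * ?g2 + dd (theta ?g1 * e2 + 2 * e1 * ?g2 + 2 * e1 * dd e2)" .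
  have "hdeg (1 + 1) (?g1 * ?g2)"
  proof (rule hdeg_mult)
    show "hdeg 1 ?g1" unfolding mult_2
      using hdeg_add[OF beta_pure_hdeg[OF P1(1)] beta_pure_hdeg[OF P1(1)]] .
    show "hdeg 1 ?g2" using beta_pure_hdeg[OF P2(1)] .
  qed
  moreover have "dd (?g1 * ?g2) = 0" using closed_exact_mult(2)[OF two c1 c2] .
  ultimately show ?thesis using eq by (metis one_add_one)
qed

lemma core_vanish:
  assumes two: "(2::'k::field) \<noteq> 0" and p: "2 \<le> p" and pz: "of_nat p = (0::'k)"
    and gx: "\<forall>r\<in>set xs. good (X r)" and gy: "\<forall>r\<in>set xs. good (Y r :: 'k op)"
    and n: "2 * length xs \<noteq> n"
  shows "lam p n (prod_list (map (\<lambda>r. kop p (X r) (Y r)) xs)) = 0"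
proof -
  have "\<forall>r\<in>set xs. \<exists>\<gamma> \<epsilon>. kop p (X r) (Y r) = \<gamma> + dd \<epsilon> \<and> dd \<gamma> = 0 \<and> hdeg 2 \<gamma>"
    using kop_split[OF two p] gx gy by blast
  then obtain G Ep where GE: "\<forall>r\<in>set xs. kop p (X r) (Y r) = G r + dd (Ep r) \<and> dd (G r) = 0 \<and> hdeg 2 (G r)"
    by metis
  have "prod_list (map (\<lambda>r. kop p (X r) (Y r)) xs) = prod_list (map (\<lambda>r. G r + dd (Ep r)) xs)"
    using GE by (intro arg_cong[where f=prod_list] map_cong) auto
  moreover obtain H where "prod_list (map (\<lambda>r. G r + dd (Ep r)) xs) = prod_list (map G xs) + dd H"
    using prod_closed_exact[OF two, of xs G Ep] GE by blast
  moreover have "hdeg (2 * length xs) (prod_list (map G xs))"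
    using hdeg_prod_list[of xs 2 G] GE by blast
  ultimately show ?thesis
    using lam_hdeg[OF _ n] lam_dd[OF pz] p by (simp add: lam_add)
qed

section \<open>Nonvanishing\<close>

lemma Rep_E_ind:
  assumes "finite B" "i \<notin> B"
  shows "Rep_op (E i) (ind a B) = (\<lambda>x. sgnp i B * (ind a (insert i B) x :: 'k::field))"
proof
  fix x :: "(nat \<Rightarrow> nat) \<times> nat set"
  obtain a' B' where x: "x = (a',B')" by (cases x)
  show "Rep_op (E i) (ind a B) x = sgnp i B * (ind a (insert i B) x :: 'k)"
  proof (cases "finite B' \<and> i \<in> B' \<and> B' - {i} = B")
    case True
    hence "B' = insert i B" by auto
    thus ?thesis using True unfolding x by (simp add: Rep_E ind_def)
  next
    case False
    moreover have "B' = insert i B \<Longrightarrow> finite B' \<and> i \<in> B' \<and> B' - {i} = B" using assms by auto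
    ultimately show ?thesis unfolding x by (auto simp add: Rep_E ind_def)
  qed
qed

lemma Rep_T_ind: "Rep_op (T i) (ind a B) = (ind (a(i := Suc (a i))) B :: 'k::field vec)"
proof
  fix x :: "(nat \<Rightarrow> nat) \<times> nat set"
  obtain a' B' where x: "x = (a',B')" by (cases x)
  have "(0 < a' i \<and> a'(i := a' i - 1) = a) \<longleftrightarrow> a' = a(i := Suc (a i))"
  proof
    assume h: "0 < a' i \<and> a'(i := a' i - 1) = a"
    show "a' = a(i := Suc (a i))"
    proof (rule ext)
      fix x show "a' x = (a(i := Suc (a i))) x"
      proof (cases "x = i")
        case True
        have "a i = (a'(i := a' i - 1)) i" using h by simp
        thus ?thesis using True h by simp
      next
        case False
        hence "a' x = (a'(i := a' i - 1)) x" by simp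
        also have "\<dots> = a x" using h by simp
        finally show ?thesis using False by simp
      qed
    qed
  next
    assume "a' = a(i := Suc (a i))"
    thus "0 < a' i \<and> a'(i := a' i - 1) = a" by auto
  qed
  thus "Rep_op (T i) (ind a B) x = (ind (a(i := Suc (a i))) B x :: 'k)"
    unfolding x by (auto simp add: Rep_T ind_def)
qed

lemma Rep_Tpow_ind: "Rep_op (T i ^ k) (ind a B) = (ind (a(i := a i + k)) B :: 'k::field vec)"
proof (induction k arbitrary: a)
  case 0 thus ?case by (simp add: Rep_one)
next
  case (Suc k)
  have "Rep_op (T i ^ Suc k) (ind a B) = Rep_op (T i ^ k) (Rep_op (T i) (ind a B))"
    by (simp add: power_Suc2 Rep_times del: power_Suc)
  also have "\<dots> = (ind ((a(i := Suc (a i)))(i := (a(i := Suc (a i))) i + k)) B :: 'k vec)"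
    by (simp only: Rep_T_ind Suc.IH)
  also have "(a(i := Suc (a i)))(i := (a(i := Suc (a i))) i + k) = a(i := a i + Suc k)" by simp
  finally show ?case .
qed

definition alph :: "nat \<Rightarrow> nat \<Rightarrow> nat \<Rightarrow> nat \<Rightarrow> nat" where
  "alph p n k = (\<lambda>i. if k \<le> i \<and> i \<le> n then p - 1 else 0)"

lemma prod_Y:
  assumes "1 \<le> k"
  shows "Rep_op (prod_list (map (\<lambda>i. T i ^ (p - 1) * E i) [k..<Suc n])) (ind (\<lambda>_. 0) {})
     = (ind (alph p n k) {k..n} :: 'k::field vec)"
  using assms
proof (induction "Suc n - k" arbitrary: k)
  case 0
  hence "n < k" by simp
  hence "alph p n k = (\<lambda>_. 0)" "{k..n} = {}" by (auto simp add: alph_def fun_eq_iff)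
  thus ?case using \<open>n < k\<close> by (simp add: Rep_one)
next
  case (Suc d)
  hence kn: "k \<le> n" by simp
  have l: "[k..<Suc n] = k # [Suc k..<Suc n]" using kn by (simp add: upt_conv_Cons)
  have IH: "Rep_op (prod_list (map (\<lambda>i. T i ^ (p - 1) * E i) [Suc k..<Suc n])) (ind (\<lambda>_. 0) {})
     = (ind (alph p n (Suc k)) {Suc k..n} :: 'k vec)"
    using Suc by simp
  have sg: "sgnp k {Suc k..n} = (1::'k)"
  proof -
    have e: "{c \<in> {Suc k..n}. c < k} = {}" by auto
    show ?thesis unfolding sgnp_def e by simp
  qed
  have ins: "insert k {Suc k..n} = {k..n}" using kn by auto
  have al: "(alph p n (Suc k))(k := alph p n (Suc k) k + (p - Suc 0)) = alph p n k"
    using kn by (auto simp add: alph_def fun_eq_iff)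
  show ?case
    unfolding l using IH
    by (simp add: Rep_times Rep_E_ind Rep_Tpow_ind sg ins al Rep_sc_fun[symmetric]
        sc_one Rep_one del: power_Suc)
qed

lemma two_pow_comm: "(2::'k::field op) ^ m * X = X * 2 ^ m"
proof -
  have "(2::'k op) ^ m = of_nat (2 ^ m)" by simp
  thus ?thesis using of_nat_op_comm by metis
qed

lemma two_pow_sc: "(2::'k::field op) ^ m = sc (2 ^ m)"
proof -
  have "(2::'k op) ^ m = of_nat (2 ^ m)" by simp
  also have "\<dots> = sc (of_nat (2 ^ m))" by (rule of_nat_op)
  finally show ?thesis by simp
qed

lemma prod_reorg:
  "prod_list (map (\<lambda>r. 2 * (Y (2 * r - 1) * Y (2 * r))) [1..<m + 1])
     = (2::'k::field op) ^ m * prod_list (map Y [1..<2 * m + 1])"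
proof (induction m)
  case 0 show ?case by simp
next
  case (Suc m)
  have l1: "[1..<Suc m + 1] = [1..<m + 1] @ [Suc m]" by simp
  have l2: "[1..<2 * Suc m + 1] = [1..<2 * m + 1] @ [2 * m + 1, 2 * m + 2]"
    by (simp add: upt_rec[of "2 * m + 1"] upt_Suc_append[symmetric])
  let ?P = "prod_list (map Y [1..<2 * m + 1])"
  have "prod_list (map (\<lambda>r. 2 * (Y (2 * r - 1) * Y (2 * r))) [1..<Suc m + 1])
      = 2 ^ m * ?P * (2 * (Y (2 * m + 1) * Y (2 * m + 2)))"
    unfolding l1 using Suc by simp
  also have "\<dots> = 2 ^ m * 2 * (?P * (Y (2 * m + 1) * Y (2 * m + 2)))"
    by (simp add: mult.assoc mult_2 mult_2_right distrib_left distrib_right)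
  also have "\<dots> = 2 ^ Suc m * (?P * (Y (2 * m + 1) * Y (2 * m + 2)))"
    by (simp only: power_Suc2)
  also have "?P * (Y (2 * m + 1) * Y (2 * m + 2)) = prod_list (map Y [1..<2 * Suc m + 1])"
    unfolding l2 by (simp add: mult.assoc del: upt_Suc)
  finally show ?case .
qed

lemma nonvanish:
  assumes two: "(2::'k::field) \<noteq> 0" and p: "2 \<le> p"
  shows "lam p (2 * m) (prod_list (map (\<lambda>r. kop p (T (2 * r - 1) + E (2 * r - 1)) (T (2 * r) + E (2 * r))) [1..<m + 1]))
     = (2 ^ m :: 'k)"
proof -
  let ?Y = "\<lambda>i. T i ^ (p - 1) * (E i :: 'k op)"
  have k: "kop p (T a + E a) (T b + E b) = 2 * (?Y a * ?Y b)" for a b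
    using kop_good[OF two p C0_T[of a] C0_T[of b]] by (simp add: dd_T beta_def)
  have "prod_list (map (\<lambda>r. kop p (T (2 * r - 1) + E (2 * r - 1)) (T (2 * r) + E (2 * r))) [1..<m + 1])
      = prod_list (map (\<lambda>r. 2 * (?Y (2 * r - 1) * ?Y (2 * r))) [1..<m + 1])"
    by (simp only: k)
  also have "\<dots> = 2 ^ m * prod_list (map ?Y [1..<2 * m + 1])" by (rule prod_reorg)
  finally have e: "prod_list (map (\<lambda>r. kop p (T (2 * r - 1) + E (2 * r - 1)) (T (2 * r) + E (2 * r))) [1..<m + 1])
      = 2 ^ m * prod_list (map ?Y [1..<Suc (2 * m)])" by simp
  have a: "alph p (2 * m) 1 = astar p (2 * m)"
    by (auto simp add: alph_def astar_def fun_eq_iff)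
  have py: "Rep_op (prod_list (map ?Y [1..<Suc (2 * m)])) (ind (\<lambda>_. 0) {}) = ind (astar p (2 * m)) {1..2 * m}"
    using prod_Y[of 1 p "2 * m"] a by simp
  show ?thesis
    unfolding e lam_def Rep_times py
    by (simp add: two_pow_sc Rep_sc_fun ind_def)
qed

definition fs :: "('k::field) ncpoly \<Rightarrow> bool" where
  "fs f \<longleftrightarrow> finite {w. f w \<noteq> 0}"

definition mon :: "(nat \<Rightarrow> 'k::field op) \<Rightarrow> nat list \<Rightarrow> 'k op" where
  "mon a w = prod_list (map a w)"

definition ev :: "(nat \<Rightarrow> 'k::field op) \<Rightarrow> 'k ncpoly \<Rightarrow> 'k op" where
  "ev a f = (\<Sum>w\<in>{w. f w \<noteq> 0}. sc (f w) * mon a w)"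

lemma mon_append: "mon a (u @ v) = mon a u * mon a v"
  by (simp add: mon_def)

lemma ev_superset:
  assumes "finite A" "{w. f w \<noteq> 0} \<subseteq> A"
  shows "ev a f = (\<Sum>w\<in>A. sc (f w) * mon a w)"
  unfolding ev_def
  by (rule sum.mono_neutral_left[OF assms]) (auto simp add: sc_zero)

lemma fs_zero: "fs nc_zero" by (simp add: fs_def nc_zero_def)
lemma fs_one: "fs nc_one" by (simp add: fs_def nc_one_def)
lemma fs_var: "fs (nc_var i)" by (simp add: fs_def nc_var_def)
lemma fs_add: "fs f \<Longrightarrow> fs g \<Longrightarrow> fs (nc_add f g)"
  unfolding fs_def nc_add_def
  by (rule finite_subset[of _ "{w. f w \<noteq> 0} \<union> {w. g w \<noteq> 0}"]) auto
lemma fs_smult: "fs f \<Longrightarrow> fs (nc_smult c f)"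
  unfolding fs_def nc_smult_def
  by (rule finite_subset[of _ "{w. f w \<noteq> 0}"]) auto

lemma supp_mul:
  "{w. nc_mul f g w \<noteq> 0} \<subseteq> (\<lambda>(u,v). u @ v) ` ({w. f w \<noteq> 0} \<times> {w. g w \<noteq> 0})"
proof
  fix w assume "w \<in> {w. nc_mul f g w \<noteq> 0}"
  then obtain i where "i \<le> length w" "f (take i w) * g (drop i w) \<noteq> 0"
    unfolding nc_mul_def by (auto elim: sum.not_neutral_contains_not_neutral)
  hence "f (take i w) \<noteq> 0" "g (drop i w) \<noteq> 0" by auto
  moreover have "w = take i w @ drop i w" by simp
  ultimately show "w \<in> (\<lambda>(u,v). u @ v) ` ({w. f w \<noteq> 0} \<times> {w. g w \<noteq> 0})"
    by (metis (mono_tags, lifting) SigmaI case_prod_conv image_eqI mem_Collect_eq)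
qed

lemma fs_mul: "fs f \<Longrightarrow> fs g \<Longrightarrow> fs (nc_mul f g)"
  unfolding fs_def using supp_mul finite_subset by blast

lemma fs_pow: "fs u \<Longrightarrow> fs (nc_pow u k)"
  by (induction k) (simp_all add: fs_one fs_mul)

lemma fs_comm: "fs f \<Longrightarrow> fs g \<Longrightarrow> fs (nc_comm f g)"
  unfolding nc_comm_def by (simp add: fs_add fs_smult fs_mul)

lemma fs_kappa: "fs f \<Longrightarrow> fs g \<Longrightarrow> fs (kappa p f g)"
  unfolding kappa_def by (simp add: fs_comm fs_mul fs_pow)

lemma ev_zero: "ev a nc_zero = 0"
  by (simp add: ev_def nc_zero_def)

lemma ev_one: "ev a nc_one = 1"
proof -
  have "{w. nc_one w \<noteq> (0::'a)} = {[]}" by (auto simp add: nc_one_def)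
  thus ?thesis by (simp add: ev_def nc_one_def sc_one mon_def)
qed

lemma ev_var: "ev a (nc_var i) = a i"
proof -
  have "{w. nc_var i w \<noteq> (0::'a)} = {[i]}" by (auto simp add: nc_var_def)
  thus ?thesis by (simp add: ev_def nc_var_def sc_one mon_def)
qed

lemma sc_sum: "sc (\<Sum>x\<in>A. f x) = (\<Sum>x\<in>A. sc (f x))"
  by (induction A rule: infinite_finite_induct) (simp_all add: sc_zero sc_add[symmetric])

lemma ev_add:
  assumes "fs f" "fs g"
  shows "ev a (nc_add f g) = ev a f + ev a g"
proof -
  let ?A = "{w. f w \<noteq> 0} \<union> {w. g w \<noteq> 0}"
  have fin: "finite ?A" using assms by (simp add: fs_def)
  have "ev a (nc_add f g) = (\<Sum>w\<in>?A. sc (nc_add f g w) * mon a w)"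
    by (rule ev_superset[OF fin]) (auto simp add: nc_add_def)
  also have "\<dots> = (\<Sum>w\<in>?A. sc (f w) * mon a w) + (\<Sum>w\<in>?A. sc (g w) * mon a w)"
    by (simp add: nc_add_def sc_add[symmetric] distrib_right sum.distrib)
  also have "\<dots> = ev a f + ev a g"
    by (simp add: ev_superset[OF fin])
  finally show ?thesis .
qed

lemma ev_smult:
  assumes "fs f"
  shows "ev a (nc_smult c f) = sc c * ev a f"
proof -
  let ?A = "{w. f w \<noteq> 0}"
  have fin: "finite ?A" using assms by (simp add: fs_def)
  have "ev a (nc_smult c f) = (\<Sum>w\<in>?A. sc (nc_smult c f w) * mon a w)"
    by (rule ev_superset[OF fin]) (auto simp add: nc_smult_def)
  also have "\<dots> = sc c * (\<Sum>w\<in>?A. sc (f w) * mon a w)"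
    by (simp add: nc_smult_def sum_distrib_left sc_mult[symmetric] mult.assoc)
  also have "\<dots> = sc c * ev a f" by (simp add: ev_def)
  finally show ?thesis .
qed

lemma ev_mul:
  assumes ff: "fs f" and fg: "fs g"
  shows "ev a (nc_mul f g) = ev a f * ev a g"
proof -
  let ?Sf = "{w. f w \<noteq> 0}" and ?Sg = "{w. g w \<noteq> 0}"
  let ?A = "(\<lambda>(u,v). u @ v) ` (?Sf \<times> ?Sg)"
  have finf: "finite ?Sf" and fing: "finite ?Sg" using ff fg by (simp_all add: fs_def)
  have finA: "finite ?A" using finf fing by simp
  define F where "F = (\<lambda>(w::nat list, i::nat). sc (f (take i w) * g (drop i w)) * mon a w)"
  let ?Sig = "Sigma ?A (\<lambda>w. {..length w})"
  let ?Z = "{(w,i). (w,i) \<in> ?Sig \<and> f (take i w) \<noteq> 0 \<and> g (drop i w) \<noteq> 0}"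
  have finSig: "finite ?Sig" using finA by (intro finite_SigmaI) auto
  have "ev a (nc_mul f g) = (\<Sum>w\<in>?A. sc (nc_mul f g w) * mon a w)"
    by (rule ev_superset[OF finA supp_mul])
  also have "\<dots> = (\<Sum>w\<in>?A. \<Sum>i\<in>{..length w}. F (w,i))"
    by (simp add: nc_mul_def F_def sc_sum sum_distrib_right)
  also have "\<dots> = (\<Sum>x\<in>?Sig. F x)"
    using sum.Sigma[OF finA, of "\<lambda>w. {..length w}" "\<lambda>w i. F (w,i)"] by simp
  also have "\<dots> = (\<Sum>x\<in>?Z. F x)"
    by (rule sum.mono_neutral_right[OF finSig]) (auto simp add: F_def sc_zero)
  also have "\<dots> = (\<Sum>x\<in>?Sf \<times> ?Sg. F ((\<lambda>(u,v). (u @ v, length u)) x))"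
  proof (rule sum.reindex_bij_betw[symmetric])
    show "bij_betw (\<lambda>(u,v). (u @ v, length u)) (?Sf \<times> ?Sg) ?Z"
    proof (rule bij_betwI')
      fix x y assume "x \<in> ?Sf \<times> ?Sg" "y \<in> ?Sf \<times> ?Sg"
      thus "((\<lambda>(u,v). (u @ v, length u)) x = (\<lambda>(u,v). (u @ v, length u)) y) = (x = y)"
        by (cases x, cases y) auto
    next
      fix x assume "x \<in> ?Sf \<times> ?Sg"
      thus "(\<lambda>(u,v). (u @ v, length u)) x \<in> ?Z" by (cases x) auto
    next
      fix y assume y: "y \<in> ?Z"
      obtain w i where wi: "y = (w,i)" by (cases y)
      have i: "i \<le> length w" using y wi by auto
      show "\<exists>x\<in>?Sf \<times> ?Sg. y = (\<lambda>(u,v). (u @ v, length u)) x"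
        using y wi i by (intro bexI[of _ "(take i w, drop i w)"]) (auto simp add: min_def)
    qed
  qed
  also have "\<dots> = (\<Sum>x\<in>?Sf \<times> ?Sg. (\<lambda>(u,v). (sc (f u) * mon a u) * (sc (g v) * mon a v)) x)"
  proof (rule sum.cong[OF refl])
    fix x assume "x \<in> ?Sf \<times> ?Sg"
    obtain u v where x: "x = (u,v)" by (cases x)
    have "sc (f u * g v) * mon a (u @ v) = sc (f u) * (sc (g v) * mon a u) * mon a v"
      by (simp add: mon_append sc_mult[symmetric] mult.assoc)
    also have "sc (g v) * mon a u = mon a u * sc (g v)" by (rule sc_comm)
    finally have "sc (f u * g v) * mon a (u @ v) = (sc (f u) * mon a u) * (sc (g v) * mon a v)"
      by (simp add: mult.assoc)
    thus "F ((\<lambda>(u,v). (u @ v, length u)) x) = (\<lambda>(u,v). (sc (f u) * mon a u) * (sc (g v) * mon a v)) x"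
      unfolding x F_def by simp
  qed
  also have "\<dots> = (\<Sum>u\<in>?Sf. \<Sum>v\<in>?Sg. (sc (f u) * mon a u) * (sc (g v) * mon a v))"
    by (simp add: sum.cartesian_product)
  also have "\<dots> = ev a f * ev a g"
    by (simp add: ev_def sum_product)
  finally show ?thesis .
qed

lemma ev_pow: "fs u \<Longrightarrow> ev a (nc_pow u k) = ev a u ^ k"
  by (induction k) (simp_all add: ev_one ev_mul fs_pow)

lemma ev_comm: "fs f \<Longrightarrow> fs g \<Longrightarrow> ev a (nc_comm f g) = ev a f * ev a g - ev a g * ev a f"
  unfolding nc_comm_def
  by (simp add: ev_add ev_smult ev_mul fs_mul fs_smult sc_neg sc_one)

lemma ev_kappa: "fs f \<Longrightarrow> fs g \<Longrightarrow> ev a (kappa p f g) = kop p (ev a f) (ev a g)"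
  unfolding kappa_def kop_def
  by (simp add: ev_mul ev_pow ev_comm fs_comm fs_mul fs_pow)

lemma ev_foldr:
  assumes "\<forall>r. fs (K r)" "fs z"
  shows "fs (foldr (\<lambda>r acc. nc_mul (K r) acc) xs z) \<and>
         ev a (foldr (\<lambda>r acc. nc_mul (K r) acc) xs z) = prod_list (map (\<lambda>r. ev a (K r)) xs) * ev a z"
  by (induction xs) (simp_all add: assms fs_mul ev_mul mult.assoc)

lemma butlast_upt: "1 \<le> m \<Longrightarrow> butlast [1..<m+1] @ [m] = [1..<m+1]"
proof -
  assume "1 \<le> m"
  hence "[1..<m+1] = [1..<m] @ [m]" by simp
  thus ?thesis by simp
qed

lemma w_poly_ev:
  assumes m: "1 \<le> m" and fu: "\<forall>i. fs (u i)"
  shows "fs (w_poly p m u) \<and>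
    ev a (w_poly p m u) = prod_list (map (\<lambda>r. kop p (ev a (u (2*r - 1))) (ev a (u (2*r)))) [1..<m+1])"
proof -
  let ?K = "\<lambda>r. kappa p (u (2*r - 1)) (u (2*r))"
  have fk: "\<forall>r. fs (?K r)" using fu by (simp add: fs_kappa)
  note F = ev_foldr[OF fk fk[rule_format, of m], where xs="butlast [1..<m+1]" and a=a]
  have "ev a (w_poly p m u) = prod_list (map (\<lambda>r. ev a (?K r)) (butlast [1..<m+1] @ [m]))"
    using F unfolding w_poly_def by simp
  also have "\<dots> = prod_list (map (\<lambda>r. ev a (?K r)) [1..<m+1])" using butlast_upt[OF m] by simp
  finally show ?thesis using F fu unfolding w_poly_def by (simp add: ev_kappa)
qed

lemma word_subst_ev:
  assumes "\<forall>i. fs (s i)"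
  shows "fs (word_subst s w) \<and> ev a (word_subst s w) = mon (\<lambda>i. ev a (s i)) w"
  by (induction w) (simp_all add: word_subst_def assms fs_mul fs_one ev_mul ev_one mon_def)

lemma ev_lincomb:
  assumes fin: "finite W" and fh: "\<forall>w. fs (h w)"
  shows "ev a (\<lambda>u. \<Sum>w\<in>W. c w * h w u) = (\<Sum>w\<in>W. sc (c w) * ev a (h w))"
proof -
  let ?S = "\<Union>w\<in>W. {u. h w u \<noteq> 0}"
  have finS: "finite ?S" using fin fh by (simp add: fs_def)
  have sub: "{u. (\<Sum>w\<in>W. c w * h w u) \<noteq> 0} \<subseteq> ?S"
  proof
    fix u assume "u \<in> {u. (\<Sum>w\<in>W. c w * h w u) \<noteq> 0}"
    then obtain w where "w \<in> W" "c w * h w u \<noteq> 0"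
      by (auto elim: sum.not_neutral_contains_not_neutral)
    thus "u \<in> ?S" by auto
  qed
  have "ev a (\<lambda>u. \<Sum>w\<in>W. c w * h w u) = (\<Sum>u\<in>?S. sc (\<Sum>w\<in>W. c w * h w u) * mon a u)"
    by (rule ev_superset[OF finS sub])
  also have "\<dots> = (\<Sum>u\<in>?S. \<Sum>w\<in>W. sc (c w) * (sc (h w u) * mon a u))"
    by (simp add: sc_sum sum_distrib_right sc_mult[symmetric] mult.assoc)
  also have "\<dots> = (\<Sum>w\<in>W. sc (c w) * (\<Sum>u\<in>?S. sc (h w u) * mon a u))"
    by (simp add: sum.swap[of _ ?S] sum_distrib_left)
  also have "\<dots> = (\<Sum>w\<in>W. sc (c w) * ev a (h w))"
  proof (rule sum.cong[OF refl])
    fix w assume w: "w \<in> W"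
    have "ev a (h w) = (\<Sum>u\<in>?S. sc (h w u) * mon a u)"
      by (rule ev_superset[OF finS]) (use w in auto)
    thus "sc (c w) * (\<Sum>u\<in>?S. sc (h w u) * mon a u) = sc (c w) * ev a (h w)" by simp
  qed
  finally show ?thesis .
qed

lemma subst_ev:
  assumes ff: "fs f" and fsub: "\<forall>i. fs (s i)"
  shows "fs (nc_subst s f) \<and> ev a (nc_subst s f) = ev (\<lambda>i. ev a (s i)) f"
proof -
  let ?W = "{w. f w \<noteq> 0}"
  have finW: "finite ?W" using ff by (simp add: fs_def)
  have fw: "\<forall>w. fs (word_subst s w)" using word_subst_ev[OF fsub] by blast
  have fsn: "fs (nc_subst s f)"
  proof -
    have "{u. nc_subst s f u \<noteq> 0} \<subseteq> (\<Union>w\<in>?W. {u. word_subst s w u \<noteq> 0})"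
    proof
      fix u assume "u \<in> {u. nc_subst s f u \<noteq> 0}"
      then obtain w where "w \<in> ?W" "f w * word_subst s w u \<noteq> 0"
        unfolding nc_subst_def by (auto elim: sum.not_neutral_contains_not_neutral)
      thus "u \<in> (\<Union>w\<in>?W. {u. word_subst s w u \<noteq> 0})" by auto
    qed
    moreover have "finite (\<Union>w\<in>?W. {u. word_subst s w u \<noteq> 0})"
      using finW fw by (simp add: fs_def)
    ultimately show ?thesis unfolding fs_def by (rule finite_subset)
  qed
  have "ev a (nc_subst s f) = (\<Sum>w\<in>?W. sc (f w) * ev a (word_subst s w))"
    unfolding nc_subst_def by (rule ev_lincomb[OF finW fw])
  also have "\<dots> = (\<Sum>w\<in>?W. sc (f w) * mon (\<lambda>i. ev a (s i)) w)"
    using word_subst_ev[OF fsub] by simp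
  also have "\<dots> = ev (\<lambda>i. ev a (s i)) f"
    by (simp only: ev_def[of "\<lambda>i. ev a (s i)" f])
  finally show ?thesis using fsn by simp
qed

lemma nc_mul_nil: "nc_mul f g [] = f [] * g []"
  by (simp add: nc_mul_def)

lemma ncP_zero: "nc_zero \<in> ncP" by (simp add: ncP_def nc_zero_def)
lemma ncP_fs: "f \<in> ncP \<Longrightarrow> fs f" by (simp add: ncP_def fs_def)
lemma ncP_add: "f \<in> ncP \<Longrightarrow> g \<in> ncP \<Longrightarrow> nc_add f g \<in> ncP"
  using fs_add[of f g] by (simp add: ncP_def fs_def nc_add_def)
lemma ncP_smult: "f \<in> ncP \<Longrightarrow> nc_smult c f \<in> ncP"
  using fs_smult[of f c] by (simp add: ncP_def fs_def nc_smult_def)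

lemma ncP_subst:
  assumes f: "f \<in> ncP" and s: "\<forall>i. s i \<in> ncP"
  shows "nc_subst s f \<in> ncP"
proof -
  have fsub: "\<forall>i. fs (s i)" using s ncP_fs by blast
  have "fs (nc_subst s f)" using subst_ev[OF ncP_fs[OF f] fsub] by blast
  moreover have "nc_subst s f [] = 0"
    unfolding nc_subst_def
  proof (rule sum.neutral, rule ballI)
    fix w assume "w \<in> {w. f w \<noteq> 0}"
    hence "w \<noteq> []" using f by (auto simp add: ncP_def)
    then obtain i w' where "w = i # w'" by (cases w) auto
    thus "f w * word_subst s w [] = 0"
      using s by (simp add: word_subst_def nc_mul_nil ncP_def)
  qed
  ultimately show ?thesis by (simp add: ncP_def fs_def)
qed

lemma kappa_nil: "u [] = 0 \<Longrightarrow> kappa p u v [] = 0"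
  by (simp add: kappa_def nc_mul_nil nc_comm_def nc_add_def nc_smult_def)

lemma w_poly_nil:
  assumes "\<forall>i. u i [] = 0"
  shows "w_poly p m u [] = 0"
proof -
  have "\<And>xs. foldr (\<lambda>r acc. nc_mul (kappa p (u (2*r - 1)) (u (2*r))) acc) xs
           (kappa p (u (2*m - 1)) (u (2*m))) [] = 0"
  proof -
    fix xs show "foldr (\<lambda>r acc. nc_mul (kappa p (u (2*r - 1)) (u (2*r))) acc) xs
           (kappa p (u (2*m - 1)) (u (2*m))) [] = 0"
      by (induction xs) (simp_all add: nc_mul_nil kappa_nil assms)
  qed
  thus ?thesis by (simp add: w_poly_def)
qed

lemma good_sum: "(\<forall>x\<in>A. good (g x)) \<Longrightarrow> good (\<Sum>x\<in>A. g x)"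
  by (induction A rule: infinite_finite_induct) (simp_all add: good_zero good_add)

lemma good_mon:
  assumes two: "(2::'k::field) \<noteq> 0" and ga: "\<forall>i. good (a i :: 'k op)"
  shows "good (mon a w)"
  by (induction w) (simp_all add: mon_def good_one good_mult[OF two] ga)

lemma good_ev:
  assumes two: "(2::'k::field) \<noteq> 0" and ga: "\<forall>i. good (a i :: 'k op)"
  shows "good (ev a f)"
  unfolding ev_def
  by (rule good_sum) (simp add: good_sc_mult[OF two] good_mon[OF two ga])

section \<open>The T-spaces\<close>

definition Vset :: "nat \<Rightarrow> nat \<Rightarrow> ('k::field) ncpoly set" where
  "Vset p m = {f \<in> ncP. \<forall>a. (\<forall>i. good (a i)) \<longrightarrow> lam p (2*m+2) (ev a f) = (0::'k)}"

lemma Vset_Tspace: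
  assumes two: "(2::'k::field) \<noteq> 0"
  shows "is_Tspace (Vset p m :: 'k ncpoly set)"
  unfolding is_Tspace_def
proof (intro conjI ballI allI impI)
  show "Vset p m \<subseteq> ncP" by (auto simp add: Vset_def)
  show "nc_zero \<in> Vset p m" by (simp add: Vset_def ncP_zero ev_zero lam_zero)
next
  fix f g :: "'k ncpoly" assume f: "f \<in> Vset p m" and g: "g \<in> Vset p m"
  hence "f \<in> ncP" "g \<in> ncP" by (auto simp add: Vset_def)
  thus "nc_add f g \<in> Vset p m"
    using f g by (simp add: Vset_def ncP_add ev_add ncP_fs lam_add)
next
  fix c :: 'k and f :: "'k ncpoly" assume f: "f \<in> Vset p m"
  hence "f \<in> ncP" by (auto simp add: Vset_def)
  thus "nc_smult c f \<in> Vset p m"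
    using f by (simp add: Vset_def ncP_smult ev_smult ncP_fs lam_sc_mult)
next
  fix s :: "nat \<Rightarrow> 'k ncpoly" and f :: "'k ncpoly"
  assume s: "\<forall>i. s i \<in> ncP" and f: "f \<in> Vset p m"
  hence fP: "f \<in> ncP" by (auto simp add: Vset_def)
  have fsub: "\<forall>i. fs (s i)" using s ncP_fs by blast
  show "nc_subst s f \<in> Vset p m"
    unfolding Vset_def
  proof (intro CollectI conjI allI impI)
    show "nc_subst s f \<in> ncP" by (rule ncP_subst[OF fP s])
    fix a :: "nat \<Rightarrow> 'k op" assume ga: "\<forall>i. good (a i)"
    have "ev a (nc_subst s f) = ev (\<lambda>i. ev a (s i)) f"
      using subst_ev[OF ncP_fs[OF fP] fsub] by blast
    moreover have "\<forall>i. good (ev a (s i))" using good_ev[OF two ga] by blast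
    ultimately show "lam p (2*m+2) (ev a (nc_subst s f)) = 0"
      using f unfolding Vset_def by auto
  qed
qed


lemma W_in_V:
  assumes two: "(2::'k::field) \<noteq> 0" and p: "2 \<le> p" and pz: "of_nat p = (0::'k)"
    and j: "1 \<le> j" "j \<le> m"
  shows "w_poly p j (\<lambda>i. nc_var (f i)) \<in> (Vset p m :: 'k ncpoly set)"
proof -
  let ?w = "w_poly p j (\<lambda>i. nc_var (f i)) :: 'k ncpoly"
  have fu: "\<forall>i. fs (nc_var (f i) :: 'k ncpoly)" by (simp add: fs_var)
  note W = w_poly_ev[OF j(1) fu]
  have "?w \<in> ncP"
    using W w_poly_nil[of "\<lambda>i. nc_var (f i)" p j] by (simp add: ncP_def fs_def nc_var_def)
  moreover have "lam p (2*m+2) (ev a ?w) = 0" if ga: "\<forall>i. good (a i)" for a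
  proof -
    have "ev a ?w = prod_list (map (\<lambda>r. kop p (a (f (2*r - 1))) (a (f (2*r)))) [1..<j+1])"
      using W by (simp add: ev_var)
    moreover have "lam p (2*m+2) (prod_list (map (\<lambda>r. kop p (a (f (2*r - 1))) (a (f (2*r)))) [1..<j+1])) = 0"
      by (rule core_vanish[OF two p pz]) (use ga j in auto)
    ultimately show ?thesis by simp
  qed
  ultimately show ?thesis by (simp add: Vset_def)
qed


lemma wnext_notin:
  assumes two: "(2::'k::field) \<noteq> 0" and p: "2 \<le> p"
  shows "w_poly p (m+1) (\<lambda>i. nc_var i) \<notin> (Vset p m :: 'k ncpoly set)"
proof
  assume h: "w_poly p (m+1) (\<lambda>i. nc_var i) \<in> (Vset p m :: 'k ncpoly set)"
  let ?a = "\<lambda>i. T i + E i :: 'k op"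
  have ga: "\<forall>i. good (?a i)" by (simp add: good_T_E)
  have fu: "\<forall>i. fs (nc_var i :: 'k ncpoly)" by (simp add: fs_var)
  have "ev ?a (w_poly p (m+1) (\<lambda>i. nc_var i) :: 'k ncpoly)
     = prod_list (map (\<lambda>r. kop p (T (2*r - 1) + E (2*r - 1)) (T (2*r) + E (2*r))) [1..<(m+1)+1])"
    using w_poly_ev[OF _ fu, of "m+1" p ?a] by (simp add: ev_var)
  hence "lam p (2*(m+1)) (ev ?a (w_poly p (m+1) (\<lambda>i. nc_var i) :: 'k ncpoly)) = 2 ^ (m+1)"
    using nonvanish[OF two p, of "m+1"] by simp
  moreover have "lam p (2*m+2) (ev ?a (w_poly p (m+1) (\<lambda>i. nc_var i) :: 'k ncpoly)) = 0"
  proof -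
    have all: "\<forall>a. (\<forall>i. good (a i)) \<longrightarrow> lam p (2*m+2) (ev a (w_poly p (m+1) (\<lambda>i. nc_var i) :: 'k ncpoly)) = (0::'k)"
      using h unfolding Vset_def by blast
    show ?thesis using spec[OF all, of ?a] ga by blast
  qed
  ultimately show False using two by simp
qed

lemma wnext_in_W: "w_poly p (m+1) (\<lambda>i. nc_var i) \<in> (W_set p :: 'k::field ncpoly set)"
  unfolding W_set_def
proof (intro CollectI exI conjI)
  show "w_poly p (m+1) (\<lambda>i. nc_var i) = (w_poly p (m+1) (\<lambda>i. nc_var ((\<lambda>i. i) i)) :: 'k ncpoly)" by simp
  show "1 \<le> m + 1" by simp
  show "strict_mono_on {1..2 * (m + 1)} (\<lambda>i::nat. i)" by (simp add: strict_mono_on_def)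
  show "\<forall>i\<in>{1..2 * (m + 1)}. 1 \<le> i" by simp
qed


definition Vp :: "nat \<Rightarrow> nat \<Rightarrow> ('k::field) ncpoly set" where
  "Vp p m = {f. \<forall>m'. m \<le> m' \<longrightarrow> f \<in> Vset p m'}"

lemma Vp_mono: "m \<le> m2 \<Longrightarrow> Vp p m \<subseteq> Vp p m2"
  by (auto simp add: Vp_def)

lemma Tsp_sub: "is_Tspace V \<Longrightarrow> V \<subseteq> ncP" by (simp add: is_Tspace_def)
lemma Tsp_zero: "is_Tspace V \<Longrightarrow> nc_zero \<in> V" by (simp add: is_Tspace_def)
lemma Tsp_add: "is_Tspace V \<Longrightarrow> f \<in> V \<Longrightarrow> g \<in> V \<Longrightarrow> nc_add f g \<in> V" by (simp add: is_Tspace_def)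
lemma Tsp_smult: "is_Tspace V \<Longrightarrow> f \<in> V \<Longrightarrow> nc_smult c f \<in> V" by (simp add: is_Tspace_def)
lemma Tsp_subst: "is_Tspace V \<Longrightarrow> \<forall>i. s i \<in> ncP \<Longrightarrow> f \<in> V \<Longrightarrow> nc_subst s f \<in> V"
  unfolding is_Tspace_def by blast

lemma Tsp_intro:
  assumes "V \<subseteq> ncP" "nc_zero \<in> V" "\<And>f g. f \<in> V \<Longrightarrow> g \<in> V \<Longrightarrow> nc_add f g \<in> V"
    "\<And>c f. f \<in> V \<Longrightarrow> nc_smult c f \<in> V"
    "\<And>s f. \<forall>i. s i \<in> ncP \<Longrightarrow> f \<in> V \<Longrightarrow> nc_subst s f \<in> V"
  shows "is_Tspace V"
  unfolding is_Tspace_def using assms by blast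

lemma Vp_Tspace:
  assumes two: "(2::'k::field) \<noteq> 0"
  shows "is_Tspace (Vp p m :: 'k ncpoly set)"
proof -
  have T: "\<And>m'. is_Tspace (Vset p m' :: 'k ncpoly set)" using Vset_Tspace[OF two] .
  show ?thesis
  proof (rule Tsp_intro)
    show "(Vp p m :: 'k ncpoly set) \<subseteq> ncP" unfolding Vp_def using Tsp_sub[OF T[of m]] by blast
    show "nc_zero \<in> (Vp p m :: 'k ncpoly set)" unfolding Vp_def using Tsp_zero[OF T] by blast
    show "nc_add f g \<in> Vp p m" if "f \<in> (Vp p m :: 'k ncpoly set)" "g \<in> Vp p m" for f g
      using that Tsp_add[OF T] unfolding Vp_def by blast
    show "nc_smult c f \<in> Vp p m" if "f \<in> (Vp p m :: 'k ncpoly set)" for c f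
      using that Tsp_smult[OF T] unfolding Vp_def by blast
    show "nc_subst s f \<in> Vp p m" if "\<forall>i. s i \<in> ncP" "f \<in> (Vp p m :: 'k ncpoly set)" for s f
      using that Tsp_subst[OF T] unfolding Vp_def by blast
  qed
qed


lemma Union_Vp_Tspace:
  assumes two: "(2::'k::field) \<noteq> 0"
  shows "is_Tspace (\<Union>m. Vp p m :: 'k ncpoly set)"
proof -
  have T: "\<And>m. is_Tspace (Vp p m :: 'k ncpoly set)" using Vp_Tspace[OF two] .
  show ?thesis
  proof (rule Tsp_intro)
    show "(\<Union>m. Vp p m :: 'k ncpoly set) \<subseteq> ncP" using Tsp_sub[OF T] by blast
    show "nc_zero \<in> (\<Union>m. Vp p m :: 'k ncpoly set)" using Tsp_zero[OF T] by blast
    show "nc_add f g \<in> (\<Union>m. Vp p m)" if f: "f \<in> (\<Union>m. Vp p m :: 'k ncpoly set)" and g: "g \<in> (\<Union>m. Vp p m)" for f g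
    proof -
      obtain a b where "f \<in> Vp p a" "g \<in> Vp p b" using f g by blast
      moreover have "Vp p a \<subseteq> (Vp p (max a b) :: 'k ncpoly set)" by (rule Vp_mono) simp
      moreover have "Vp p b \<subseteq> (Vp p (max a b) :: 'k ncpoly set)" by (rule Vp_mono) simp
      ultimately have "f \<in> Vp p (max a b)" "g \<in> Vp p (max a b)" by blast+
      hence "nc_add f g \<in> Vp p (max a b)" using Tsp_add[OF T] by blast
      thus ?thesis by blast
    qed
    show "nc_smult c f \<in> (\<Union>m. Vp p m)" if "f \<in> (\<Union>m. Vp p m :: 'k ncpoly set)" for c f
      using that Tsp_smult[OF T] by blast
    show "nc_subst s f \<in> (\<Union>m. Vp p m)" if "\<forall>i. s i \<in> ncP" "f \<in> (\<Union>m. Vp p m :: 'k ncpoly set)" for s f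
      using that Tsp_subst[OF T] by blast
  qed
qed

lemma finite_in_chain:
  assumes "finite H" "H \<subseteq> (\<Union>m. Vp p m :: 'k::field ncpoly set)"
  shows "\<exists>M. H \<subseteq> Vp p M"
  using assms
proof (induction H rule: finite_induct)
  case empty show ?case by blast
next
  case (insert x H)
  then obtain b where b: "H \<subseteq> Vp p b" by blast
  from insert obtain a where a: "x \<in> Vp p a" by blast
  have "Vp p a \<subseteq> (Vp p (max a b) :: 'k ncpoly set)" by (rule Vp_mono) simp
  moreover have "Vp p b \<subseteq> (Vp p (max a b) :: 'k ncpoly set)" by (rule Vp_mono) simp
  ultimately have "insert x H \<subseteq> Vp p (max a b)" using a b by blast
  thus ?case by blast
qed

lemma Tclosure_sub: "is_Tspace V \<Longrightarrow> H \<subseteq> V \<Longrightarrow> Tclosure H \<subseteq> V"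
  unfolding Tclosure_def by blast

lemma sub_Tclosure: "H \<subseteq> Tclosure H"
  unfolding Tclosure_def by blast


theorem corollary2p5:
  fixes p :: nat
  assumes "prime p" and "p > 2" and "CHAR('k::field) = p"
  shows "\<not> finitely_based (Tclosure (W_set p :: 'k ncpoly set))"
proof
  assume "finitely_based (Tclosure (W_set p :: 'k ncpoly set))"
  then obtain H where H: "finite H" "H \<subseteq> ncP" "Tclosure (W_set p :: 'k ncpoly set) = Tclosure H"
    unfolding finitely_based_def by blast
  have pz: "of_nat p = (0::'k)" using assms(3) by (metis of_nat_CHAR)
  have two: "(2::'k) \<noteq> 0"
  proof
    assume z: "(2::'k) = 0"
    have "p dvd 2" using z of_nat_eq_0_iff_char_dvd[of 2, where 'a='k] assms(3) by simp
    thus False using assms(2) by (simp add: nat_dvd_not_less)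
  qed
  have p2: "2 \<le> p" using assms(2) by simp
  have WU: "W_set p \<subseteq> (\<Union>m. Vp p m :: 'k ncpoly set)"
  proof
    fix w assume "w \<in> (W_set p :: 'k ncpoly set)"
    then obtain j f where w: "w = w_poly p j (\<lambda>i. nc_var (f i))" and j: "1 \<le> j"
      unfolding W_set_def by blast
    have "w \<in> Vp p j" unfolding Vp_def w using W_in_V[OF two p2 pz j] by blast
    thus "w \<in> (\<Union>m. Vp p m)" by blast
  qed
  have "H \<subseteq> (\<Union>m. Vp p m)"
    using sub_Tclosure[of H] H(3) Tclosure_sub[OF Union_Vp_Tspace[OF two] WU] by blast
  then obtain M where M: "H \<subseteq> Vp p M" using finite_in_chain[OF H(1)] by blast
  have "Tclosure H \<subseteq> Vp p M" by (rule Tclosure_sub[OF Vp_Tspace[OF two] M])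
  moreover have "w_poly p (M+1) (\<lambda>i. nc_var i) \<in> Tclosure H"
    using H(3) sub_Tclosure[of "W_set p :: 'k ncpoly set"] wnext_in_W[of p M] by blast
  ultimately have "w_poly p (M+1) (\<lambda>i. nc_var i) \<in> (Vset p M :: 'k ncpoly set)"
    unfolding Vp_def by blast
  thus False using wnext_notin[OF two p2] by blast
qed


end
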